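(* Fix $T\ge1$ and $\delta\in(0,1)$ and run Variation-aware UCRL with confidence parameter $\delta$ and variation parameters $\tilde V^r=V^r_T$, $\tilde V^p=V^p_T$. For a step $t\le T$, let $\mathcal M(t)$ be the set of MDPs with rewards $\tilde r$ and transition probabilities $\tilde p$ such that for all $(s,a)$: $|\tilde r(s,a)-\hat r_t(s,a)|\le V^r_T+\sqrt{8\log(8SAt^3/\delta)/\max(1,N_t(s,a))}$ and $\|\tilde p(\cdot\mid s,a)-\hat p_t(\cdot\mid s,a)\|_1\le V^p_T+\sqrt{8S\log(8SAt^3/\delta)/\max(1,N_t(s,a))}$. Then with probability at least $1-\frac{5\delta}{6}$, for every $t=1,\dots,T$ the set $\mathcal M(t)$ contains all MDPs $M_\tau$, $\tau=1,\dots,T$.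
   Context: Let $\mathcal S$ be a finite set of $S$ states and $\mathcal A$ a finite set of $A$ actions. Changing environment: for every step $t$ there is an MDP $M_t=(\mathcal S,\mathcal A,\bar r_t,p_t,s_1)$ (fixed in advance). At step $t$, in state $s_t$, the learner chooses $a_t$, receives a random reward $r_t\in[0,1]$ with mean $\bar r_t(s_t,a_t)$, and moves to $s_{t+1}\sim p_t(\cdot\mid s_t,a_t)$. Variations: $V^r_T=\sum_{t=1}^{T-1}\max_{s,a}|\bar r_{t+1}(s,a)-\bar r_t(s,a)|$, $V^p_T=\sum_{t=1}^{T-1}\max_{s,a}\|p_{t+1}(\cdot\mid s,a)-p_t(\cdot\mid s,a)\|_1$. For a step $t$, $N_t(s,a)$ is the number of steps $\tau<t$ with $(s_\tau,a_\tau)=(s,a)$, $\hat r_t(s,a)=\sum_{\tau<t}r_\tau\mathbb 1\{s_\tau=s,a_\tau=a\}/\max(1,N_t(s,a))$ and $\hat p_t(s'\mid s,a)=\#\{\tau<t:s_\tau=s,a_\tau=a,s_{\tau+1}=s'\}/\max(1,N_t(s,a))$. Variation-aware UCRL (inputs $\delta$, $\tilde V^r,\tilde V^p\ge0$) proceeds in episodes $k=1,2,\dots$ starting at steps $t_k$ ($t_1=1$). With $N_k:=N_{t_k}$, $\hat r_k:=\hat r_{t_k}$, $\hat p_k:=\hat p_{t_k}$ and $v_k(s,a)$ the number of visits of $(s,a)$ within episode $k$, the plausible set $\mathcal M_k$ consists of all MDPs satisfying $|\tilde r(s,a)-\hat r_k(s,a)|\le\tilde V^r+\sqrt{8\log(8SAt_k^3/\delta)/\max(1,N_k(s,a))}$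 and $\|\tilde p(\cdot\mid s,a)-\hat p_k(\cdot\mid s,a)\|_1\le\tilde V^p+\sqrt{8S\log(8SAt_k^3/\delta)/\max(1,N_k(s,a))}$ for all $(s,a)$. The algorithm computes a stationary policy $\tilde\pi_k$ and $\tilde M_k\in\mathcal M_k$ with $\rho(\tilde M_k,\tilde\pi_k)=\max_{M'\in\mathcal M_k}\rho^*(M')$ (where $\rho^*$ is the optimal long-run average reward), and plays $a_t=\tilde\pi_k(s_t)$ as long as $v_k(s_t,\tilde\pi_k(s_t))<\max(1,N_k(s_t,\tilde\pi_k(s_t)))$; when this fails a new episode begins. *)

theory Defs
  imports "HOL-Probability.Probability"
begin

text \<open>Trajectory of the learner: on a probability space M, step t (t \<ge> 1) has
  state s t, action a t and reward r t.\<close>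

definition hist_alg ::
  "'w measure \<Rightarrow> (nat \<Rightarrow> 'w \<Rightarrow> 's) \<Rightarrow> (nat \<Rightarrow> 'w \<Rightarrow> 'a) \<Rightarrow> (nat \<Rightarrow> 'w \<Rightarrow> real) \<Rightarrow> nat \<Rightarrow> 'w measure"
where
  "hist_alg M s a r t = sigma (space M)
     ({{\<omega> \<in> space M. s \<tau> \<omega> = x} | \<tau> x. 1 \<le> \<tau> \<and> \<tau> \<le> t}
      \<union> {{\<omega> \<in> space M. a \<tau> \<omega> = y} | \<tau> y. 1 \<le> \<tau> \<and> \<tau> < t}
      \<union> {{\<omega> \<in> space M. r \<tau> \<omega> \<in> B} | \<tau> B. 1 \<le> \<tau> \<and> \<tau> < t \<and> B \<in> sets borel})"

definition visit_count ::
  "(nat \<Rightarrow> 'w \<Rightarrow> 's) \<Rightarrow> (nat \<Rightarrow> 'w \<Rightarrow> 'a) \<Rightarrow> nat \<Rightarrow> 'w \<Rightarrow> 's \<Rightarrow> 'a \<Rightarrow> nat"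
where
  "visit_count s a t \<omega> x y = card {\<tau> \<in> {1..<t}. s \<tau> \<omega> = x \<and> a \<tau> \<omega> = y}"

definition emp_reward ::
  "(nat \<Rightarrow> 'w \<Rightarrow> 's) \<Rightarrow> (nat \<Rightarrow> 'w \<Rightarrow> 'a) \<Rightarrow> (nat \<Rightarrow> 'w \<Rightarrow> real) \<Rightarrow> nat \<Rightarrow> 'w \<Rightarrow> 's \<Rightarrow> 'a \<Rightarrow> real"
where
  "emp_reward s a r t \<omega> x y =
     (\<Sum>\<tau> \<in> {\<tau> \<in> {1..<t}. s \<tau> \<omega> = x \<and> a \<tau> \<omega> = y}. r \<tau> \<omega>)
       / max 1 (real (visit_count s a t \<omega> x y))"

definition emp_trans ::
  "(nat \<Rightarrow> 'w \<Rightarrow> 's) \<Rightarrow> (nat \<Rightarrow> 'w \<Rightarrow> 'a) \<Rightarrow> nat \<Rightarrow> 'w \<Rightarrow> 's \<Rightarrow> 'a \<Rightarrow> 's \<Rightarrow> real"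
where
  "emp_trans s a t \<omega> x y x' =
     real (card {\<tau> \<in> {1..<t}. s \<tau> \<omega> = x \<and> a \<tau> \<omega> = y \<and> s (Suc \<tau>) \<omega> = x'})
       / max 1 (real (visit_count s a t \<omega> x y))"

definition reward_variation :: "(nat \<Rightarrow> 's::finite \<Rightarrow> 'a::finite \<Rightarrow> real) \<Rightarrow> nat \<Rightarrow> real" where
  "reward_variation rbar T =
     (\<Sum>t \<in> {1..<T}. Max ((\<lambda>(x, y). \<bar>rbar (Suc t) x y - rbar t x y\<bar>) ` UNIV))"

definition trans_variation :: "(nat \<Rightarrow> 's::finite \<Rightarrow> 'a::finite \<Rightarrow> 's pmf) \<Rightarrow> nat \<Rightarrow> real" where
  "trans_variation p T =
     (\<Sum>t \<in> {1..<T}. Max ((\<lambda>(x, y). \<Sum>x'\<in>UNIV. \<bar>pmf (p (Suc t) x y) x' - pmf (p t x y) x'\<bar>) ` UNIV))"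

definition in_plausible ::
  "real \<Rightarrow> real \<Rightarrow> real \<Rightarrow> (nat \<Rightarrow> 'w \<Rightarrow> 's::finite) \<Rightarrow> (nat \<Rightarrow> 'w \<Rightarrow> 'a::finite) \<Rightarrow> (nat \<Rightarrow> 'w \<Rightarrow> real)
    \<Rightarrow> nat \<Rightarrow> 'w \<Rightarrow> ('s \<Rightarrow> 'a \<Rightarrow> real) \<Rightarrow> ('s \<Rightarrow> 'a \<Rightarrow> 's pmf) \<Rightarrow> bool"
where
  "in_plausible \<delta> Vr Vp s a r t \<omega> rt pt \<longleftrightarrow>
     (\<forall>x y.
        \<bar>rt x y - emp_reward s a r t \<omega> x y\<bar>
          \<le> Vr + sqrt (8 * ln (8 * real CARD('s) * real CARD('a) * real t ^ 3 / \<delta>)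
                        / max 1 (real (visit_count s a t \<omega> x y)))
      \<and> (\<Sum>x'\<in>UNIV. \<bar>pmf (pt x y) x' - emp_trans s a t \<omega> x y x'\<bar>)
          \<le> Vp + sqrt (8 * real CARD('s) * ln (8 * real CARD('s) * real CARD('a) * real t ^ 3 / \<delta>)
                        / max 1 (real (visit_count s a t \<omega> x y))))"

end

theory Submission
  imports Defs "HOL-Probability.Hoeffding"
begin
lemma hist_space: "space (hist_alg M s a r t) = space M"
  unfolding hist_alg_def by (rule space_measure_of) auto

lemma hist_sets: "sets (hist_alg M s a r t) = sigma_sets (space M)
     ({{\<omega> \<in> space M. s \<tau> \<omega> = x} | \<tau> x. 1 \<le> \<tau> \<and> \<tau> \<le> t}
      \<union> {{\<omega> \<in> space M. a \<tau> \<omega> = y} | \<tau> y. 1 \<le> \<tau> \<and> \<tau> < t}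
      \<union> {{\<omega> \<in> space M. r \<tau> \<omega> \<in> B} | \<tau> B. 1 \<le> \<tau> \<and> \<tau> < t \<and> B \<in> sets borel})"
  unfolding hist_alg_def by (rule sets_measure_of) auto

lemma hist_mono: "t \<le> t' \<Longrightarrow> sets (hist_alg M s a r t) \<subseteq> sets (hist_alg M s a r t')"
proof -
  assume tt: "t \<le> t'"
  show ?thesis unfolding hist_sets
  proof (intro sigma_sets_mono' Un_mono subsetI)
    fix X assume "X \<in> {{\<omega> \<in> space M. s \<tau> \<omega> = x} | \<tau> x. 1 \<le> \<tau> \<and> \<tau> \<le> t}"
    then obtain \<tau> x where o: "X = {\<omega> \<in> space M. s \<tau> \<omega> = x}" "1 \<le> \<tau>" "\<tau> \<le> t" by blast
    show "X \<in> {{\<omega> \<in> space M. s \<tau> \<omega> = x} | \<tau> x. 1 \<le> \<tau> \<and> \<tau> \<le> t'}" by (rule CollectI, rule exI[of _ \<tau>], rule exI[of _ x]) (use tt o in auto)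
  next
    fix X assume "X \<in> {{\<omega> \<in> space M. a \<tau> \<omega> = x} | \<tau> x. 1 \<le> \<tau> \<and> \<tau> < t}"
    then obtain \<tau> x where o: "X = {\<omega> \<in> space M. a \<tau> \<omega> = x}" "1 \<le> \<tau>" "\<tau> < t" by blast
    show "X \<in> {{\<omega> \<in> space M. a \<tau> \<omega> = x} | \<tau> x. 1 \<le> \<tau> \<and> \<tau> < t'}" by (rule CollectI, rule exI[of _ \<tau>], rule exI[of _ x]) (use tt o in auto)
  next
    fix X assume "X \<in> {{\<omega> \<in> space M. r \<tau> \<omega> \<in> B} | \<tau> B. 1 \<le> \<tau> \<and> \<tau> < t \<and> B \<in> sets borel}"
    then obtain \<tau> B where o: "X = {\<omega> \<in> space M. r \<tau> \<omega> \<in> B}" "1 \<le> \<tau>" "\<tau> < t" "B \<in> sets borel" by blast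
    show "X \<in> {{\<omega> \<in> space M. r \<tau> \<omega> \<in> B} | \<tau> B. 1 \<le> \<tau> \<and> \<tau> < t' \<and> B \<in> sets borel}" by (rule CollectI, rule exI[of _ \<tau>], rule exI[of _ B]) (use tt o in auto)
  qed
qed

lemma hist_subalg_mono: "t \<le> t' \<Longrightarrow> subalgebra (hist_alg M s a r t') (hist_alg M s a r t)"
  unfolding subalgebra_def using hist_mono[of t t'] by (simp add: hist_space)

lemma hist_s_meas:
  fixes s :: "nat \<Rightarrow> 'w \<Rightarrow> 's::countable"
  assumes "1 \<le> \<tau>" "\<tau> \<le> t"
  shows "s \<tau> \<in> measurable (hist_alg M s a r t) (count_space UNIV)"
proof (subst measurable_count_space_eq2_countable, intro conjI ballI)
  fix x
  have "s \<tau> -` {x} \<inter> space (hist_alg M s a r t) = {\<omega> \<in> space M. s \<tau> \<omega> = x}"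
    by (auto simp: hist_space)
  also have "\<dots> \<in> sets (hist_alg M s a r t)"
    unfolding hist_sets by (rule sigma_sets.Basic, rule UnI1, rule UnI1, rule CollectI, rule exI[of _ \<tau>], rule exI[of _ x]) (use assms in auto)
  finally show "s \<tau> -` {x} \<inter> space (hist_alg M s a r t) \<in> sets (hist_alg M s a r t)" .
qed auto

lemma hist_r_meas:
  assumes "1 \<le> \<tau>" "\<tau> < t"
  shows "r \<tau> \<in> borel_measurable (hist_alg M s a r t)"
proof (rule measurableI)
  fix B :: "real set" assume B: "B \<in> sets borel"
  have "r \<tau> -` B \<inter> space (hist_alg M s a r t) = {\<omega> \<in> space M. r \<tau> \<omega> \<in> B}"
    by (auto simp: hist_space)
  also have "\<dots> \<in> sets (hist_alg M s a r t)"
    unfolding hist_sets by (rule sigma_sets.Basic, rule UnI2, rule CollectI, rule exI[of _ \<tau>], rule exI[of _ B]) (use assms B in auto)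
  finally show "r \<tau> -` B \<inter> space (hist_alg M s a r t) \<in> sets (hist_alg M s a r t)" .
qed auto

lemma hist_a_meas:
  assumes "\<forall>t\<ge>1. a t \<in> measurable (hist_alg M s a r t) (count_space UNIV)"
    and "1 \<le> \<tau>" "\<tau> \<le> t"
  shows "a \<tau> \<in> measurable (hist_alg M s a r t) (count_space UNIV)"
proof -
  have "a \<tau> \<in> measurable (hist_alg M s a r \<tau>) (count_space UNIV)" using assms by auto
  from measurable_from_subalg[OF hist_subalg_mono[of \<tau> t] this] show ?thesis using assms by simp
qed

lemma hist_sub_M:
  fixes s :: "nat \<Rightarrow> 'w \<Rightarrow> 's::countable" and a :: "nat \<Rightarrow> 'w \<Rightarrow> 'a::countable"
  assumes sm: "\<forall>t. s t \<in> measurable M (count_space UNIV)"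
    and rm: "\<forall>t. r t \<in> borel_measurable M"
    and am: "\<forall>t\<ge>1. a t \<in> measurable (hist_alg M s a r t) (count_space UNIV)"
  shows "sets (hist_alg M s a r t) \<subseteq> sets M"
proof (induction t rule: less_induct)
  case (less t)
  show ?case unfolding hist_sets
  proof (rule sets.sigma_sets_subset, safe)
    fix \<tau> x assume "1 \<le> \<tau>" "\<tau> \<le> t"
    have "s \<tau> -` {x} \<inter> space M \<in> sets M" using sm measurable_sets[of "s \<tau>" M "count_space UNIV" "{x}"] by auto
    moreover have "s \<tau> -` {x} \<inter> space M = {\<omega> \<in> space M. s \<tau> \<omega> = x}" by auto
    ultimately show "{\<omega> \<in> space M. s \<tau> \<omega> = x} \<in> sets M" by simp
  next
    fix \<tau> y assume h: "1 \<le> \<tau>" "\<tau> < t"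
    have "subalgebra M (hist_alg M s a r \<tau>)"
      using less[OF h(2)] unfolding subalgebra_def by (simp add: hist_space)
    moreover have "a \<tau> \<in> measurable (hist_alg M s a r \<tau>) (count_space UNIV)" using am h by auto
    ultimately have "a \<tau> \<in> measurable M (count_space UNIV)"
      by (rule measurable_from_subalg)
    then have "a \<tau> -` {y} \<inter> space M \<in> sets M" using measurable_sets[of "a \<tau>" M "count_space UNIV" "{y}"] by auto
    moreover have "a \<tau> -` {y} \<inter> space M = {\<omega> \<in> space M. a \<tau> \<omega> = y}" by auto
    ultimately show "{\<omega> \<in> space M. a \<tau> \<omega> = y} \<in> sets M" by simp
  next
    fix \<tau> and B :: "real set" assume "B \<in> sets borel"
    then have "r \<tau> -` B \<inter> space M \<in> sets M" using rm measurable_sets[of "r \<tau>" M borel B] by auto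
    moreover have "r \<tau> -` B \<inter> space M = {\<omega> \<in> space M. r \<tau> \<omega> \<in> B}" by auto
    ultimately show "{\<omega> \<in> space M. r \<tau> \<omega> \<in> B} \<in> sets M" by simp
  qed
qed

lemma orth_indicator:
  fixes f h g :: "'w \<Rightarrow> real"
  assumes ps: "prob_space M" and sub: "subalgebra M F"
    and fm: "f \<in> borel_measurable M" and hm: "h \<in> borel_measurable F"
    and fb: "\<forall>\<omega>\<in>space M. \<bar>f \<omega>\<bar> \<le> Bf" and hb: "\<forall>\<omega>\<in>space M. \<bar>h \<omega>\<bar> \<le> Bh"
    and eq: "\<forall>E\<in>sets F. (\<integral>\<omega>. indicator E \<omega> * f \<omega> \<partial>M) = (\<integral>\<omega>. indicator E \<omega> * h \<omega> \<partial>M)"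
    and gm: "g \<in> borel_measurable F" and gb: "\<forall>\<omega>\<in>space M. \<bar>g \<omega>\<bar> \<le> Bg"
  shows "(\<integral>\<omega>. g \<omega> * f \<omega> \<partial>M) = (\<integral>\<omega>. g \<omega> * h \<omega> \<partial>M)"
proof -
  interpret prob_space M by (fact ps)
  interpret fs: finite_measure_subalgebra M F
    by unfold_locales (fact sub)
  have hM: "h \<in> borel_measurable M" using measurable_from_subalg[OF sub hm] .
  have gM: "g \<in> borel_measurable M" using measurable_from_subalg[OF sub gm] .
  have fi: "integrable M f"
    by (rule integrable_const_bound[where B=Bf]) (use fb fm in auto)
  have hi: "integrable M h"
    by (rule integrable_const_bound[where B=Bh]) (use hb hM in auto)
  have gfb: "\<bar>g \<omega> * f \<omega>\<bar> \<le> Bg * Bf" if "\<omega> \<in> space M" for \<omega>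
  proof -
    have "\<bar>g \<omega>\<bar> \<le> Bg" "\<bar>f \<omega>\<bar> \<le> Bf" using gb fb that by auto
    moreover have "0 \<le> Bg" using \<open>\<bar>g \<omega>\<bar> \<le> Bg\<close> abs_ge_zero order_trans by blast
    ultimately show ?thesis by (simp add: abs_mult mult_mono)
  qed
  have gfi: "integrable M (\<lambda>\<omega>. g \<omega> * f \<omega>)"
    by (rule integrable_const_bound[where B="Bg * Bf"]) (use gfb fm gM in auto)
  have ae: "AE \<omega> in M. real_cond_exp M F f \<omega> = h \<omega>"
  proof (rule fs.real_cond_exp_charact)
    fix A assume "A \<in> sets F"
    then show "(\<integral>x\<in>A. f x \<partial>M) = (\<integral>x\<in>A. h x \<partial>M)"
      using eq unfolding set_lebesgue_integral_def by simp
  qed (use fi hi hm in auto)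
  have "(\<integral>\<omega>. g \<omega> * f \<omega> \<partial>M) = (\<integral>\<omega>. g \<omega> * real_cond_exp M F f \<omega> \<partial>M)"
    using fs.real_cond_exp_intg(2)[OF gfi gm fm] by simp
  also have "\<dots> = (\<integral>\<omega>. g \<omega> * h \<omega> \<partial>M)"
    by (rule integral_cong_AE) (use ae gM hM in auto)
  finally show ?thesis .
qed

lemma cosh_le_exp_sq: "cosh (x::real) \<le> exp (x^2/2)"
proof -
  have main: "cosh x \<le> exp (x^2/2)" if x0: "x \<ge> 0" for x :: real
  proof -
    have "-(2*x) * (1/2) + ln (1 + (1/2) * (exp (2*x) - 1)) \<le> (2*x)^2/8"
      using Hoeffdings_lemma_aux[of "2*x" "1/2"] x0 by simp
    then have "ln ((1 + exp (2*x))/2) \<le> x + x^2/2"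
      by (simp add: power2_eq_square field_simps)
    then have "(1 + exp (2*x))/2 \<le> exp (x + x^2/2)"
      by (metis add_pos_pos divide_pos_pos exp_gt_zero exp_le_cancel_iff exp_ln zero_less_one zero_less_numeral)
    then have "exp (-x) * ((1 + exp (2*x))/2) \<le> exp (-x) * exp (x + x^2/2)"
      by (intro mult_left_mono) auto
    moreover have "exp (-x) * ((1 + exp (2*x))/2) = cosh x"
      by (simp add: cosh_def exp_add[symmetric] field_simps mult_exp_exp)
    moreover have "exp (-x) * exp (x + x^2/2) = exp (x^2/2)"
      by (simp add: mult_exp_exp)
    ultimately show ?thesis by simp
  qed
  show ?thesis
  proof (cases "x \<ge> 0")
    case True then show ?thesis using main by simp
  next
    case False
    then have "cosh (-x) \<le> exp ((-x)^2/2)" using main[of "-x"] by simp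
    then show ?thesis by simp
  qed
qed

lemma exp_le_cosh_sinh:
  fixes l d c :: real
  assumes "c > 0" "\<bar>d\<bar> \<le> c"
  shows "exp (l * d) \<le> cosh (l * c) + (d / c) * sinh (l * c)"
proof -
  define th where "th = (c + d) / (2 * c)"
  have th01: "0 \<le> th" "th \<le> 1" using assms by (auto simp: th_def field_simps)
  have dd: "d = th * c + (1 - th) * (-c)" using assms by (simp add: th_def field_simps)
  have cv: "convex_on UNIV exp" by (rule convex_on_realI[where f'=exp]) (auto intro!: derivative_eq_intros)
  have "exp ((1 - th) * (-(l*c)) + th * (l*c)) \<le> (1 - th) * exp (-(l*c)) + th * exp (l*c)"
    using convex_onD[OF cv, of th "-(l*c)" "l*c"] th01 by simp
  moreover have "l * d = (1 - th) * (-(l*c)) + th * (l*c)" by (subst dd) (simp add: algebra_simps)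
  moreover have "(1 - th) * exp (-(l*c)) + th * exp (l*c) = cosh (l * c) + (d / c) * sinh (l * c)"
    using assms by (simp add: th_def cosh_def sinh_def field_simps)
  ultimately show ?thesis by simp
qed

lemma bint:
  assumes "finite_measure M" "f \<in> borel_measurable M" "\<forall>\<omega>\<in>space M. \<bar>f \<omega>\<bar> \<le> (B::real)"
  shows "integrable M f"
proof -
  interpret finite_measure M by fact
  show ?thesis by (rule integrable_const_bound[where B=B]) (use assms in auto)
qed

lemma exp_supermart:
  fixes M :: "'w measure" and F :: "nat \<Rightarrow> 'w measure" and I d :: "nat \<Rightarrow> 'w \<Rightarrow> real" and c l :: real
  assumes ps: "prob_space M"
  and sub: "\<forall>k. subalgebra M (F k)"
  and mono: "\<forall>k k'. k \<le> k' \<longrightarrow> subalgebra (F k') (F k)"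
  and Im: "\<forall>k\<ge>1. I k \<in> borel_measurable (F k)" and Iv: "\<forall>k \<omega>. I k \<omega> = 0 \<or> I k \<omega> = 1"
  and dm: "\<forall>k\<ge>1. d k \<in> borel_measurable (F (Suc k))"
  and db: "\<forall>k\<ge>1. \<forall>\<omega>\<in>space M. \<bar>d k \<omega>\<bar> \<le> c" and c: "c > 0"
  and orth: "\<forall>k\<ge>1. \<forall>g B. g \<in> borel_measurable (F k) \<longrightarrow> (\<forall>\<omega>\<in>space M. \<bar>g \<omega>\<bar> \<le> B)
              \<longrightarrow> (\<integral>\<omega>. g \<omega> * d k \<omega> \<partial>M) = 0"
  defines "Z \<equiv> \<lambda>t \<omega>. exp (l * (\<Sum>k\<in>{1..<t}. I k \<omega> * d k \<omega>) - l^2*c^2/2 * (\<Sum>k\<in>{1..<t}. I k \<omega>))"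
  shows "t \<ge> 1 \<Longrightarrow> Z t \<in> borel_measurable (F t) \<and> (\<forall>\<omega>\<in>space M. 0 < Z t \<omega> \<and> Z t \<omega> \<le> exp (\<bar>l\<bar>*c*t))
           \<and> (\<integral>\<omega>. Z t \<omega> \<partial>M) \<le> 1"
proof -
  interpret prob_space M by (fact ps)
  have fm: "finite_measure M" by unfold_locales
  have Zm: "Z t \<in> borel_measurable (F t)" for t
  proof -
    have Ik: "I k \<in> borel_measurable (F t)" if "k \<in> {1..<t}" for k
      using measurable_from_subalg[of "F t" "F k" "I k"] mono Im that by auto
    have dk: "d k \<in> borel_measurable (F t)" if "k \<in> {1..<t}" for k
      using measurable_from_subalg[of "F t" "F (Suc k)" "d k"] mono dm that by auto
    have A: "(\<lambda>\<omega>. \<Sum>k\<in>{1..<t}. I k \<omega> * d k \<omega>) \<in> borel_measurable (F t)"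
      by (rule borel_measurable_sum) (use Ik dk in auto)
    have B: "(\<lambda>\<omega>. \<Sum>k\<in>{1..<t}. I k \<omega>) \<in> borel_measurable (F t)"
      by (rule borel_measurable_sum) (use Ik in auto)
    show ?thesis unfolding Z_def
      by (intro measurable_compose[OF _ borel_measurable_exp] borel_measurable_diff borel_measurable_times borel_measurable_const A B)
  qed
  have Zb: "0 < Z t \<omega> \<and> Z t \<omega> \<le> exp (\<bar>l\<bar>*c*t)" if "\<omega> \<in> space M" for t \<omega>
  proof -
    have "\<bar>\<Sum>k\<in>{1..<t}. I k \<omega> * d k \<omega>\<bar> \<le> (\<Sum>k\<in>{1..<t}. c)"
    proof -
      have "\<bar>\<Sum>k\<in>{1..<t}. I k \<omega> * d k \<omega>\<bar> \<le> (\<Sum>k\<in>{1..<t}. \<bar>I k \<omega> * d k \<omega>\<bar>)" by (rule sum_abs)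
      also have "\<dots> \<le> (\<Sum>k\<in>{1..<t}. c)"
      proof (rule sum_mono)
        fix k assume "k \<in> {1..<t}"
        then have "\<bar>d k \<omega>\<bar> \<le> c" using db that by auto
        then show "\<bar>I k \<omega> * d k \<omega>\<bar> \<le> c" using Iv[rule_format, of k \<omega>] c by auto
      qed
      finally show ?thesis .
    qed
    also have "\<dots> \<le> c * t" using c by simp
    finally have s1: "\<bar>\<Sum>k\<in>{1..<t}. I k \<omega> * d k \<omega>\<bar> \<le> c * t" .
    have s2: "0 \<le> (\<Sum>k\<in>{1..<t}. I k \<omega>)" by (rule sum_nonneg) (metis Iv order_refl zero_le_one)
    have "l * (\<Sum>k\<in>{1..<t}. I k \<omega> * d k \<omega>) \<le> \<bar>l\<bar> * (c * t)"
    proof -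
      have "l * (\<Sum>k\<in>{1..<t}. I k \<omega> * d k \<omega>) \<le> \<bar>l\<bar> * \<bar>\<Sum>k\<in>{1..<t}. I k \<omega> * d k \<omega>\<bar>"
        by (metis abs_ge_self abs_mult)
      also have "\<dots> \<le> \<bar>l\<bar> * (c * t)" using s1 by (intro mult_left_mono) auto
      finally show ?thesis .
    qed
    moreover have "0 \<le> l^2*c^2/2 * (\<Sum>k\<in>{1..<t}. I k \<omega>)" using s2 by simp
    ultimately show ?thesis unfolding Z_def by (simp add: mult.assoc)
  qed
  show "t \<ge> 1 \<Longrightarrow> Z t \<in> borel_measurable (F t) \<and> (\<forall>\<omega>\<in>space M. 0 < Z t \<omega> \<and> Z t \<omega> \<le> exp (\<bar>l\<bar>*c*t))
           \<and> (\<integral>\<omega>. Z t \<omega> \<partial>M) \<le> 1"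
  proof (induction t rule: dec_induct)
    case base
    have "Z 1 = (\<lambda>\<omega>. 1)" unfolding Z_def by auto
    then show ?case using Zm Zb c by (simp add: prob_space)
  next
    case (step t)
    define K where "K = exp (-(l^2*c^2/2))"
    have K0: "0 < K" unfolding K_def by simp
    have Kc: "K * cosh (l*c) \<le> 1"
    proof -
      have "cosh (l*c) \<le> exp ((l*c)^2/2)" by (rule cosh_le_exp_sq)
      then have "K * cosh (l*c) \<le> K * exp ((l*c)^2/2)" using K0 by simp
      also have "\<dots> = exp (-(l^2*c^2/2) + (l*c)^2/2)" unfolding K_def by (rule exp_add[symmetric])
      also have "\<dots> = 1" by (simp add: power_mult_distrib)
      finally show ?thesis .
    qed
    have Kc0: "0 \<le> K * cosh (l*c)" using K0 by (simp add: less_imp_le)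
    define A where "A = (\<lambda>\<omega>. Z t \<omega> * (1 - I t \<omega> + I t \<omega> * (K * cosh (l*c))))"
    define G where "G = (\<lambda>\<omega>. Z t \<omega> * I t \<omega> * (K * sinh (l*c) / c))"
    have ZtM: "Z t \<in> borel_measurable M" using measurable_from_subalg[OF sub[rule_format, of t] Zm[of t]] .
    have ItF: "I t \<in> borel_measurable (F t)" using Im[rule_format, OF step(1)] .
    have ItM: "I t \<in> borel_measurable M" using measurable_from_subalg[OF sub[rule_format, of t] ItF] .
    have dtM: "d t \<in> borel_measurable M" using measurable_from_subalg[OF sub[rule_format, of "Suc t"] dm[rule_format, OF step(1)]] .
    have ZSM: "Z (Suc t) \<in> borel_measurable M" using measurable_from_subalg[OF sub[rule_format, of "Suc t"] Zm[of "Suc t"]] .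
    have GF: "G \<in> borel_measurable (F t)" unfolding G_def by (intro borel_measurable_times borel_measurable_const Zm ItF)
    have GM: "G \<in> borel_measurable M" unfolding G_def by (intro borel_measurable_times borel_measurable_const ZtM ItM)
    have AM: "A \<in> borel_measurable M" unfolding A_def by (intro borel_measurable_times borel_measurable_add borel_measurable_diff borel_measurable_const ZtM ItM)
    have Gb: "\<forall>\<omega>\<in>space M. \<bar>G \<omega>\<bar> \<le> exp (\<bar>l\<bar>*c*t) * \<bar>K * sinh (l*c) / c\<bar>"
    proof
      fix \<omega> assume "\<omega> \<in> space M"
      then have "\<bar>Z t \<omega>\<bar> \<le> exp (\<bar>l\<bar>*c*t)" using Zb[of \<omega> t] by (simp add: abs_of_pos)
      moreover have "\<bar>I t \<omega>\<bar> \<le> 1" using Iv[rule_format, of t \<omega>] by auto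
      moreover have "\<bar>Z t \<omega> * I t \<omega>\<bar> \<le> \<bar>Z t \<omega>\<bar>" using Iv[rule_format, of t \<omega>] by auto
      ultimately have "\<bar>Z t \<omega> * I t \<omega>\<bar> \<le> exp (\<bar>l\<bar>*c*t)" by linarith
      then show "\<bar>G \<omega>\<bar> \<le> exp (\<bar>l\<bar>*c*t) * \<bar>K * sinh (l*c) / c\<bar>"
      proof -
        have "\<bar>G \<omega>\<bar> = \<bar>Z t \<omega> * I t \<omega>\<bar> * \<bar>K * sinh (l*c) / c\<bar>" unfolding G_def by (rule abs_mult)
        also have "\<dots> \<le> exp (\<bar>l\<bar>*c*t) * \<bar>K * sinh (l*c) / c\<bar>"
          by (intro mult_right_mono) (use \<open>\<bar>Z t \<omega> * I t \<omega>\<bar> \<le> exp (\<bar>l\<bar>*c*t)\<close> in auto)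
        finally show ?thesis .
      qed
    qed
    have orth0: "(\<integral>\<omega>. G \<omega> * d t \<omega> \<partial>M) = 0"
      using orth[rule_format, OF step(1) GF] Gb by blast
    have pt: "Z (Suc t) \<omega> \<le> A \<omega> + G \<omega> * d t \<omega>" if "\<omega> \<in> space M" for \<omega>
    proof -
      have s1: "(\<Sum>k\<in>{1..<Suc t}. I k \<omega> * d k \<omega>) = (\<Sum>k\<in>{1..<t}. I k \<omega> * d k \<omega>) + I t \<omega> * d t \<omega>"
        using step(1) by (rule sum.atLeastLessThan_Suc)
      have s2: "(\<Sum>k\<in>{1..<Suc t}. I k \<omega>) = (\<Sum>k\<in>{1..<t}. I k \<omega>) + I t \<omega>"
        using step(1) by (rule sum.atLeastLessThan_Suc)
      have split: "Z (Suc t) \<omega> = Z t \<omega> * exp (l * (I t \<omega> * d t \<omega>) - l^2*c^2/2 * I t \<omega>)"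
      proof -
        have "Z (Suc t) \<omega> = exp (l * ((\<Sum>k\<in>{1..<t}. I k \<omega> * d k \<omega>) + I t \<omega> * d t \<omega>) - l^2*c^2/2 * ((\<Sum>k\<in>{1..<t}. I k \<omega>) + I t \<omega>))"
          unfolding Z_def s1 s2 by (rule refl)
        also have "\<dots> = exp ((l * (\<Sum>k\<in>{1..<t}. I k \<omega> * d k \<omega>) - l^2*c^2/2 * (\<Sum>k\<in>{1..<t}. I k \<omega>)) + (l * (I t \<omega> * d t \<omega>) - l^2*c^2/2 * I t \<omega>))"
          by (rule arg_cong[where f=exp]) (simp add: algebra_simps)
        also have "\<dots> = Z t \<omega> * exp (l * (I t \<omega> * d t \<omega>) - l^2*c^2/2 * I t \<omega>)"
          unfolding Z_def by (rule exp_add)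
        finally show ?thesis .
      qed
      show ?thesis
      proof (cases "I t \<omega> = 0")
        case True then show ?thesis unfolding split A_def G_def by simp
      next
        case False
        then have I1: "I t \<omega> = 1" using Iv by blast
        have "exp (l * d t \<omega>) \<le> cosh (l * c) + (d t \<omega> / c) * sinh (l * c)"
          by (rule exp_le_cosh_sinh) (use c db step that in auto)
        then have "Z t \<omega> * K * exp (l * d t \<omega>) \<le> Z t \<omega> * K * (cosh (l * c) + (d t \<omega> / c) * sinh (l * c))"
          using Zb[OF that, of t] K0 by (intro mult_left_mono) auto
        moreover have "Z (Suc t) \<omega> = Z t \<omega> * K * exp (l * d t \<omega>)"
        proof -
          have "l * (I t \<omega> * d t \<omega>) - l^2*c^2/2 * I t \<omega> = -(l^2*c^2/2) + l * d t \<omega>"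
            using I1 by simp
          then show ?thesis unfolding split K_def by (simp only: exp_add mult.assoc)
        qed
        moreover have "A \<omega> + G \<omega> * d t \<omega> = Z t \<omega> * K * (cosh (l * c) + (d t \<omega> / c) * sinh (l * c))"
          unfolding A_def G_def I1 using c by (simp add: field_simps)
        ultimately show ?thesis by simp
      qed
    qed
    have Ale: "A \<omega> \<le> Z t \<omega>" if "\<omega> \<in> space M" for \<omega>
    proof -
      have "1 - I t \<omega> + I t \<omega> * (K * cosh (l*c)) \<le> 1" using Iv[rule_format, of t \<omega>] Kc by auto
      then show ?thesis unfolding A_def using Zb[OF that, of t] by (simp add: mult_left_le)
    qed
    have Ab: "\<forall>\<omega>\<in>space M. \<bar>A \<omega>\<bar> \<le> exp (\<bar>l\<bar>*c*t)"
    proof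
      fix \<omega> assume w: "\<omega> \<in> space M"
      have "0 \<le> 1 - I t \<omega> + I t \<omega> * (K * cosh (l*c))" using Iv[rule_format, of t \<omega>] Kc0 by auto
      then have "0 \<le> A \<omega>" unfolding A_def using Zb[OF w, of t] by simp
      then show "\<bar>A \<omega>\<bar> \<le> exp (\<bar>l\<bar>*c*t)" using Ale[OF w] Zb[OF w, of t] by simp
    qed
    have Ai: "integrable M A" by (rule bint[OF fm AM Ab])
    have GDi: "integrable M (\<lambda>\<omega>. G \<omega> * d t \<omega>)"
    proof (rule bint[OF fm, where B="exp (\<bar>l\<bar>*c*t) * \<bar>K * sinh (l*c) / c\<bar> * c"])
      show "(\<lambda>\<omega>. G \<omega> * d t \<omega>) \<in> borel_measurable M" by (intro borel_measurable_times GM dtM)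
      show "\<forall>\<omega>\<in>space M. \<bar>G \<omega> * d t \<omega>\<bar> \<le> exp (\<bar>l\<bar>*c*t) * \<bar>K * sinh (l*c) / c\<bar> * c"
      proof
        fix \<omega> assume w: "\<omega> \<in> space M"
        have "\<bar>G \<omega> * d t \<omega>\<bar> = \<bar>G \<omega>\<bar> * \<bar>d t \<omega>\<bar>" by (rule abs_mult)
        also have "\<dots> \<le> exp (\<bar>l\<bar>*c*t) * \<bar>K * sinh (l*c) / c\<bar> * c"
          by (rule mult_mono) (use Gb db step(1) w in auto)
        finally show "\<bar>G \<omega> * d t \<omega>\<bar> \<le> exp (\<bar>l\<bar>*c*t) * \<bar>K * sinh (l*c) / c\<bar> * c" .
      qed
    qed
    have Zti: "integrable M (Z t)" by (rule bint[OF fm ZtM]) (use Zb in \<open>auto simp: abs_of_pos\<close>)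
    have ZSi: "integrable M (Z (Suc t))" by (rule bint[OF fm ZSM]) (use Zb in \<open>auto simp: abs_of_pos\<close>)
    have "(\<integral>\<omega>. Z (Suc t) \<omega> \<partial>M) \<le> (\<integral>\<omega>. A \<omega> + G \<omega> * d t \<omega> \<partial>M)"
      by (rule integral_mono[OF ZSi]) (use Ai GDi pt in auto)
    also have "\<dots> = (\<integral>\<omega>. A \<omega> \<partial>M)" using Ai GDi orth0 by simp
    also have "\<dots> \<le> (\<integral>\<omega>. Z t \<omega> \<partial>M)" by (rule integral_mono[OF Ai Zti]) (use Ale in auto)
    also have "\<dots> \<le> 1" using step by simp
    finally show ?case using Zm Zb by blast
  qed
qed

lemma tail_bound:
  fixes M :: "'w measure" and F :: "nat \<Rightarrow> 'w measure" and I d :: "nat \<Rightarrow> 'w \<Rightarrow> real" and c u :: real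
  assumes ps: "prob_space M"
  and sub: "\<forall>k. subalgebra M (F k)"
  and mono: "\<forall>k k'. k \<le> k' \<longrightarrow> subalgebra (F k') (F k)"
  and Im: "\<forall>k\<ge>1. I k \<in> borel_measurable (F k)" and Iv: "\<forall>k \<omega>. I k \<omega> = 0 \<or> I k \<omega> = 1"
  and dm: "\<forall>k\<ge>1. d k \<in> borel_measurable (F (Suc k))"
  and db: "\<forall>k\<ge>1. \<forall>\<omega>\<in>space M. \<bar>d k \<omega>\<bar> \<le> c" and c: "c > 0"
  and orth: "\<forall>k\<ge>1. \<forall>g B. g \<in> borel_measurable (F k) \<longrightarrow> (\<forall>\<omega>\<in>space M. \<bar>g \<omega>\<bar> \<le> B)
              \<longrightarrow> (\<integral>\<omega>. g \<omega> * d k \<omega> \<partial>M) = 0"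
  and t: "t \<ge> 1" and n: "n > 0" and u: "u > 0"
  shows "measure M {\<omega>\<in>space M. (\<Sum>k\<in>{1..<t}. I k \<omega>) = real n \<and> u \<le> (\<Sum>k\<in>{1..<t}. I k \<omega> * d k \<omega>)}
           \<le> exp (-(u^2 / (2 * c^2 * n)))"
proof -
  interpret prob_space M by (fact ps)
  define l where "l = u / (c^2 * n)"
  define Z where "Z = (\<lambda>t \<omega>. exp (l * (\<Sum>k\<in>{1..<t}. I k \<omega> * d k \<omega>) - l^2*c^2/2 * (\<Sum>k\<in>{1..<t}. I k \<omega>)))"
  have l0: "l \<ge> 0" using u c n unfolding l_def by simp
  have R: "Z t \<in> borel_measurable (F t) \<and> (\<forall>\<omega>\<in>space M. 0 < Z t \<omega> \<and> Z t \<omega> \<le> exp (\<bar>l\<bar>*c*t))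
           \<and> (\<integral>\<omega>. Z t \<omega> \<partial>M) \<le> 1"
    unfolding Z_def by (rule exp_supermart[OF ps sub mono Im Iv dm db c orth t])
  have ZM[measurable]: "Z t \<in> borel_measurable M" using measurable_from_subalg[OF sub[rule_format, of t]] R by blast
  have Zi: "integrable M (Z t)"
    by (rule integrable_const_bound[where B="exp (\<bar>l\<bar>*c*t)"]) (use R in \<open>auto simp: abs_of_pos\<close>)
  define C where "C = exp (u^2 / (2 * c^2 * n))"
  have C0: "C > 0" unfolding C_def by simp
  have sub1: "{\<omega>\<in>space M. (\<Sum>k\<in>{1..<t}. I k \<omega>) = real n \<and> u \<le> (\<Sum>k\<in>{1..<t}. I k \<omega> * d k \<omega>)}
      \<subseteq> {\<omega>\<in>space M. Z t \<omega> \<ge> C}"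
  proof safe
    fix \<omega> assume w: "\<omega> \<in> space M" and N: "(\<Sum>k\<in>{1..<t}. I k \<omega>) = real n"
      and U: "u \<le> (\<Sum>k\<in>{1..<t}. I k \<omega> * d k \<omega>)"
    have "l * u \<le> l * (\<Sum>k\<in>{1..<t}. I k \<omega> * d k \<omega>)" using U l0 by (rule mult_left_mono)
    moreover have "l * u - l^2*c^2/2 * real n = u^2 / (2 * c^2 * n)"
      unfolding l_def using c n by (simp add: field_simps power2_eq_square)
    ultimately have "u^2 / (2 * c^2 * n) \<le> l * (\<Sum>k\<in>{1..<t}. I k \<omega> * d k \<omega>) - l^2*c^2/2 * (\<Sum>k\<in>{1..<t}. I k \<omega>)"
      unfolding N by linarith
    then show "C \<le> Z t \<omega>" unfolding C_def Z_def by simp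
  qed
  have "measure M {\<omega>\<in>space M. (\<Sum>k\<in>{1..<t}. I k \<omega>) = real n \<and> u \<le> (\<Sum>k\<in>{1..<t}. I k \<omega> * d k \<omega>)}
      \<le> measure M {\<omega>\<in>space M. Z t \<omega> \<ge> C}"
    by (rule finite_measure_mono[OF sub1]) measurable
  also have "\<dots> \<le> (\<integral>\<omega>. Z t \<omega> \<partial>M) / C"
    by (rule integral_Markov_inequality_measure[OF Zi _ _ C0, where A="space M"]) (use R in \<open>auto intro!: AE_I2 less_imp_le\<close>)
  also have "\<dots> \<le> 1 / C" using R C0 by (simp add: divide_right_mono)
  also have "\<dots> = exp (-(u^2 / (2 * c^2 * n)))" unfolding C_def by (simp add: exp_minus inverse_eq_divide)
  finally show ?thesis .
qed

lemma cpair_meas: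
  fixes g :: "'w \<Rightarrow> 'b::countable" and h :: "'w \<Rightarrow> 'c::countable"
  assumes "g \<in> measurable N (count_space UNIV)" "h \<in> measurable N (count_space UNIV)"
  shows "(\<lambda>\<omega>. (g \<omega>, h \<omega>)) \<in> measurable N (count_space UNIV)"
proof (subst measurable_count_space_eq2_countable, intro conjI ballI)
  fix z :: "'b \<times> 'c"
  obtain b c where z: "z = (b, c)" by (cases z)
  have "(\<lambda>\<omega>. (g \<omega>, h \<omega>)) -` {z} \<inter> space N = (g -` {b} \<inter> space N) \<inter> (h -` {c} \<inter> space N)"
    using z by auto
  also have "\<dots> \<in> sets N"
    using measurable_sets[OF assms(1), of "{b}"] measurable_sets[OF assms(2), of "{c}"] by auto
  finally show "(\<lambda>\<omega>. (g \<omega>, h \<omega>)) -` {z} \<inter> space N \<in> sets N" .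
qed auto

lemma cfun_meas:
  fixes g :: "'w \<Rightarrow> 'b::countable" and f :: "'b \<Rightarrow> real"
  assumes "g \<in> measurable N (count_space UNIV)"
  shows "(\<lambda>\<omega>. f (g \<omega>)) \<in> borel_measurable N"
  using measurable_compose[OF assms borel_measurable_count_space[of f UNIV]] by simp

lemma cfun2_meas:
  fixes g :: "'w \<Rightarrow> 'b::countable" and h :: "'w \<Rightarrow> 'c::countable" and f :: "'b \<Rightarrow> 'c \<Rightarrow> real"
  assumes "g \<in> measurable N (count_space UNIV)" "h \<in> measurable N (count_space UNIV)"
  shows "(\<lambda>\<omega>. f (g \<omega>) (h \<omega>)) \<in> borel_measurable N"
  using cfun_meas[OF cpair_meas[OF assms], of "\<lambda>(b,c). f b c"] by simp

lemma cfun3_meas: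
  fixes g :: "'w \<Rightarrow> 'b::countable" and h :: "'w \<Rightarrow> 'c::countable" and k :: "'w \<Rightarrow> 'd::countable"
    and f :: "'b \<Rightarrow> 'c \<Rightarrow> 'd \<Rightarrow> real"
  assumes "g \<in> measurable N (count_space UNIV)" "h \<in> measurable N (count_space UNIV)"
    "k \<in> measurable N (count_space UNIV)"
  shows "(\<lambda>\<omega>. f (g \<omega>) (h \<omega>) (k \<omega>)) \<in> borel_measurable N"
  using cfun_meas[OF cpair_meas[OF cpair_meas[OF assms(1,2)] assms(3)], of "\<lambda>((b,c),d). f b c d"] by simp

lemma telesc:
  fixes g :: "nat \<Rightarrow> 'v" and D :: "'v \<Rightarrow> 'v \<Rightarrow> real"
  assumes tri: "\<And>u v w. D u w \<le> D u v + D v w" and z: "\<And>u. D u u = 0"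
  shows "i \<le> j \<Longrightarrow> D (g j) (g i) \<le> (\<Sum>k\<in>{i..<j}. D (g (Suc k)) (g k))"
proof (induction j rule: dec_induct)
  case base then show ?case using z by simp
next
  case (step j)
  have "D (g (Suc j)) (g i) \<le> D (g (Suc j)) (g j) + D (g j) (g i)" by (rule tri)
  also have "\<dots> \<le> D (g (Suc j)) (g j) + (\<Sum>k\<in>{i..<j}. D (g (Suc k)) (g k))" using step by simp
  also have "\<dots> = (\<Sum>k\<in>{i..<Suc j}. D (g (Suc k)) (g k))"
    using step(1) by (simp add: sum.atLeastLessThan_Suc)
  finally show ?case .
qed

lemma telesc2:
  fixes g :: "nat \<Rightarrow> 'v" and D :: "'v \<Rightarrow> 'v \<Rightarrow> real"
  assumes tri: "\<And>u v w. D u w \<le> D u v + D v w" and z: "\<And>u. D u u = 0" and sy: "\<And>u v. D u v = D v u"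
    and ij: "1 \<le> i" "i \<le> T" "1 \<le> j" "j \<le> T"
    and bd: "\<And>k. D (g (Suc k)) (g k) \<le> b k"
  shows "D (g j) (g i) \<le> (\<Sum>k\<in>{1..<T}. b k)"
proof -
  have nn: "0 \<le> D u v" for u v
  proof -
    have "D u u \<le> D u v + D v u" by (rule tri)
    then show ?thesis using z sy by simp
  qed
  have gen: "D (g j') (g i') \<le> (\<Sum>k\<in>{1..<T}. b k)" if "1 \<le> i'" "i' \<le> j'" "j' \<le> T" for i' j'
  proof -
    have "D (g j') (g i') \<le> (\<Sum>k\<in>{i'..<j'}. D (g (Suc k)) (g k))"
      by (rule telesc[OF tri z that(2)])
    also have "\<dots> \<le> (\<Sum>k\<in>{1..<T}. D (g (Suc k)) (g k))"
      by (rule sum_mono2) (use that nn in auto)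
    also have "\<dots> \<le> (\<Sum>k\<in>{1..<T}. b k)" by (rule sum_mono) (rule bd)
    finally show ?thesis .
  qed
  show ?thesis
  proof (cases "i \<le> j")
    case True then show ?thesis using gen ij by simp
  next
    case False
    then show ?thesis using gen[of j i] ij sy[of "g j" "g i"] by simp
  qed
qed

lemma sum_ind_card:
  "finite A \<Longrightarrow> (\<Sum>k\<in>A. (if P k then 1 else 0) :: real) = real (card {k\<in>A. P k})"
  by (simp add: sum.If_cases Int_def conj_commute)

lemma sum_ind_filter:
  "finite A \<Longrightarrow> (\<Sum>k\<in>A. (if P k then 1 else 0) * (f k :: real)) = (\<Sum>k\<in>{k\<in>A. P k}. f k)"
  by (simp add: sum.inter_filter if_distrib[where f="\<lambda>x. x * _"] cong: if_cong)

lemma det_reward: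
  fixes V :: "nat set" and rr rb :: "nat \<Rightarrow> real"
  assumes V: "finite V" "card V = N" "N \<ge> 1"
    and var: "\<forall>k\<in>V. \<bar>R0 - rb k\<bar> \<le> Vr"
    and m1: "(\<Sum>k\<in>V. rr k - rb k) < real N * Q" and m2: "(\<Sum>k\<in>V. rb k - rr k) < real N * Q"
  shows "\<bar>R0 - (\<Sum>k\<in>V. rr k) / max 1 (real N)\<bar> \<le> Vr + Q"
proof -
  have N0: "real N > 0" using V by simp
  have mx: "max 1 (real N) = real N" using V by simp
  have "R0 - (\<Sum>k\<in>V. rr k) / real N = ((\<Sum>k\<in>V. R0 - rb k) - (\<Sum>k\<in>V. rr k - rb k)) / real N"
    using N0 V by (simp add: sum_subtractf field_simps)
  also have "\<bar>\<dots>\<bar> = \<bar>(\<Sum>k\<in>V. R0 - rb k) - (\<Sum>k\<in>V. rr k - rb k)\<bar> / real N"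
    using N0 by simp
  also have "\<dots> \<le> (real N * Vr + real N * Q) / real N"
  proof (rule divide_right_mono)
    have "\<bar>\<Sum>k\<in>V. R0 - rb k\<bar> \<le> (\<Sum>k\<in>V. \<bar>R0 - rb k\<bar>)" by (rule sum_abs)
    also have "\<dots> \<le> (\<Sum>k\<in>V. Vr)" by (rule sum_mono) (use var in auto)
    also have "\<dots> = real N * Vr" using V by simp
    finally have a: "\<bar>\<Sum>k\<in>V. R0 - rb k\<bar> \<le> real N * Vr" .
    have b: "\<bar>\<Sum>k\<in>V. rr k - rb k\<bar> < real N * Q"
    proof -
      have "(\<Sum>k\<in>V. rb k - rr k) = - (\<Sum>k\<in>V. rr k - rb k)" by (simp add: sum_negf[symmetric])
      then show ?thesis using m1 m2 by linarith
    qed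
    show "\<bar>(\<Sum>k\<in>V. R0 - rb k) - (\<Sum>k\<in>V. rr k - rb k)\<bar> \<le> real N * Vr + real N * Q"
      using a b by linarith
  qed simp
  also have "\<dots> = Vr + Q" using N0 by (simp add: field_simps)
  finally show ?thesis unfolding mx .
qed

lemma det_trans:
  fixes V :: "nat set" and P0 :: "'s::finite \<Rightarrow> real" and Pk ind :: "nat \<Rightarrow> 's \<Rightarrow> real"
  assumes V: "finite V" "card V = N" "N \<ge> 1"
    and var: "\<forall>k\<in>V. (\<Sum>x'\<in>UNIV. \<bar>P0 x' - Pk k x'\<bar>) \<le> Vp"
    and m: "\<forall>B. (\<Sum>k\<in>V. \<Sum>x'\<in>UNIV. (if x' \<in> B then 1 else -1) * (ind k x' - Pk k x')) < real N * Q"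
  shows "(\<Sum>x'\<in>UNIV. \<bar>P0 x' - (\<Sum>k\<in>V. ind k x') / max 1 (real N)\<bar>) \<le> Vp + Q"
proof -
  have N0: "real N > 0" using V by simp
  have mx: "max 1 (real N) = real N" using V by simp
  define q where "q = (\<lambda>x'. \<Sum>k\<in>V. ind k x' - Pk k x')"
  define B where "B = {x'. q x' \<ge> 0}"
  have qabs: "\<bar>q x'\<bar> = (if x' \<in> B then 1 else -1) * q x'" for x'
    unfolding B_def by auto
  have sq: "(\<Sum>x'\<in>UNIV. \<bar>q x'\<bar>) < real N * Q"
  proof -
    have "(\<Sum>x'\<in>UNIV. \<bar>q x'\<bar>) = (\<Sum>x'\<in>UNIV. \<Sum>k\<in>V. (if x' \<in> B then 1 else -1) * (ind k x' - Pk k x'))"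
      by (simp only: qabs) (simp add: q_def sum_distrib_left)
    also have "\<dots> = (\<Sum>k\<in>V. \<Sum>x'\<in>UNIV. (if x' \<in> B then 1 else -1) * (ind k x' - Pk k x'))"
      by (rule sum.swap)
    also have "\<dots> < real N * Q" using m by blast
    finally show ?thesis .
  qed
  have eq: "P0 x' - (\<Sum>k\<in>V. ind k x') / real N = ((\<Sum>k\<in>V. P0 x' - Pk k x') - q x') / real N" for x'
    using N0 V unfolding q_def by (simp add: sum_subtractf field_simps)
  have "(\<Sum>x'\<in>UNIV. \<bar>P0 x' - (\<Sum>k\<in>V. ind k x') / real N\<bar>)
      = (\<Sum>x'\<in>UNIV. \<bar>(\<Sum>k\<in>V. P0 x' - Pk k x') - q x'\<bar> / real N)"
    unfolding eq using N0 by simp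
  also have "\<dots> = (\<Sum>x'\<in>UNIV. \<bar>(\<Sum>k\<in>V. P0 x' - Pk k x') - q x'\<bar>) / real N"
    by (simp add: sum_divide_distrib)
  also have "\<dots> \<le> (real N * Vp + real N * Q) / real N"
  proof (rule divide_right_mono)
    have "(\<Sum>x'\<in>UNIV. \<bar>(\<Sum>k\<in>V. P0 x' - Pk k x') - q x'\<bar>)
        \<le> (\<Sum>x'\<in>UNIV. (\<Sum>k\<in>V. \<bar>P0 x' - Pk k x'\<bar>) + \<bar>q x'\<bar>)"
    proof (rule sum_mono)
      fix x'
      have "\<bar>\<Sum>k\<in>V. P0 x' - Pk k x'\<bar> \<le> (\<Sum>k\<in>V. \<bar>P0 x' - Pk k x'\<bar>)" by (rule sum_abs)
      then show "\<bar>(\<Sum>k\<in>V. P0 x' - Pk k x') - q x'\<bar> \<le> (\<Sum>k\<in>V. \<bar>P0 x' - Pk k x'\<bar>) + \<bar>q x'\<bar>"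
        by linarith
    qed
    also have "\<dots> = (\<Sum>k\<in>V. \<Sum>x'\<in>UNIV. \<bar>P0 x' - Pk k x'\<bar>) + (\<Sum>x'\<in>UNIV. \<bar>q x'\<bar>)"
      by (simp add: sum.distrib sum.swap[of _ UNIV V])
    also have "\<dots> \<le> (\<Sum>k\<in>V. Vp) + real N * Q"
      using sq by (intro add_mono sum_mono) (use var in auto)
    also have "\<dots> = real N * Vp + real N * Q" using V by simp
    finally show "(\<Sum>x'\<in>UNIV. \<bar>(\<Sum>k\<in>V. P0 x' - Pk k x') - q x'\<bar>) \<le> real N * Vp + real N * Q" .
  qed simp
  also have "\<dots> = Vp + Q" using N0 by (simp add: field_simps)
  finally show ?thesis unfolding mx .
qed

lemma aux3:
  fixes x :: real assumes x: "x > 0"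
  shows "(x - 1) / x ^ 3 \<le> 1 / x - 1 / (x + 1)"
proof -
  have x1: "x + 1 > 0" using x by simp
  have "(x - 1) * (x + 1) \<le> x^2" by (simp add: algebra_simps power2_eq_square)
  then have "x - 1 \<le> x^2 / (x + 1)" using x1 by (simp add: le_divide_eq)
  then have "(x - 1) / x ^ 3 \<le> x^2 / (x + 1) / x ^ 3" by (rule divide_right_mono) (use x in simp)
  also have "x^2 / (x + 1) / x ^ 3 = 1 / (x * (x + 1))"
  proof -
    have "x ^ 3 = x * x^2" by (simp add: power3_eq_cube power2_eq_square)
    then show ?thesis using x x1 by simp
  qed
  also have "\<dots> = 1 / x - 1 / (x + 1)" using x x1 by (simp add: field_simps)
  finally show ?thesis .
qed

lemma sum_t3: "(\<Sum>t\<in>{1..T}. (real t - 1) / real t ^ 3) \<le> 1 - 1 / (real T + 1)"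
proof (induction T)
  case 0 then show ?case by simp
next
  case (Suc T)
  have "(\<Sum>t\<in>{1..Suc T}. (real t - 1) / real t ^ 3) = (\<Sum>t\<in>{1..T}. (real t - 1) / real t ^ 3) + real T / (real T + 1) ^ 3"
    by (simp add: add.commute)
  also have "\<dots> \<le> 1 - 1 / (real T + 1) + real T / (real T + 1) ^ 3" using Suc by simp
  also have "\<dots> \<le> 1 - 1 / (real (Suc T) + 1)"
  proof -
    have "real T / (real T + 1) ^ 3 \<le> 1 / (real T + 1) - 1 / (real T + 1 + 1)"
      using aux3[of "real T + 1"] by simp
    moreover have "real (Suc T) + 1 = real T + 1 + 1" by simp
    ultimately show ?thesis by simp
  qed
  finally show ?case .
qed

lemma orth_diff:
  fixes f h g :: "'w \<Rightarrow> real"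
  assumes ps: "prob_space M" and sub: "subalgebra M F"
    and fm: "f \<in> borel_measurable M" and hm: "h \<in> borel_measurable F"
    and fb: "\<forall>\<omega>\<in>space M. \<bar>f \<omega>\<bar> \<le> Bf" and hb: "\<forall>\<omega>\<in>space M. \<bar>h \<omega>\<bar> \<le> Bh"
    and eq: "\<forall>E\<in>sets F. (\<integral>\<omega>. indicator E \<omega> * f \<omega> \<partial>M) = (\<integral>\<omega>. indicator E \<omega> * h \<omega> \<partial>M)"
    and gm: "g \<in> borel_measurable F" and gb: "\<forall>\<omega>\<in>space M. \<bar>g \<omega>\<bar> \<le> Bg"
  shows "(\<integral>\<omega>. g \<omega> * (f \<omega> - h \<omega>) \<partial>M) = 0" "(\<integral>\<omega>. g \<omega> * (h \<omega> - f \<omega>) \<partial>M) = 0"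
    "integrable M (\<lambda>\<omega>. g \<omega> * (f \<omega> - h \<omega>))"
proof -
  interpret prob_space M by (fact ps)
  have fm': "finite_measure M" by unfold_locales
  have hM: "h \<in> borel_measurable M" using measurable_from_subalg[OF sub hm] .
  have gM: "g \<in> borel_measurable M" using measurable_from_subalg[OF sub gm] .
  have bnd: "\<bar>g \<omega> * k \<omega>\<bar> \<le> Bg * Bk" if "\<forall>\<omega>\<in>space M. \<bar>k \<omega>\<bar> \<le> Bk" "\<omega> \<in> space M" for k :: "'w \<Rightarrow> real" and Bk \<omega>
  proof -
    have "\<bar>g \<omega>\<bar> \<le> Bg" "\<bar>k \<omega>\<bar> \<le> Bk" using gb that by auto
    moreover have "0 \<le> Bg" using \<open>\<bar>g \<omega>\<bar> \<le> Bg\<close> abs_ge_zero order_trans by blast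
    ultimately show ?thesis by (simp add: abs_mult mult_mono)
  qed
  have i1: "integrable M (\<lambda>\<omega>. g \<omega> * f \<omega>)"
    by (rule bint[OF fm', where B="Bg * Bf"]) (use gM fm bnd[OF fb] in auto)
  have i2: "integrable M (\<lambda>\<omega>. g \<omega> * h \<omega>)"
    by (rule bint[OF fm', where B="Bg * Bh"]) (use gM hM bnd[OF hb] in auto)
  have e: "(\<integral>\<omega>. g \<omega> * f \<omega> \<partial>M) = (\<integral>\<omega>. g \<omega> * h \<omega> \<partial>M)"
    by (rule orth_indicator[OF ps sub fm hm fb hb eq gm gb])
  have "(\<integral>\<omega>. g \<omega> * (f \<omega> - h \<omega>) \<partial>M) = (\<integral>\<omega>. g \<omega> * f \<omega> - g \<omega> * h \<omega> \<partial>M)"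
    by (simp add: right_diff_distrib)
  also have "\<dots> = 0" using i1 i2 e by simp
  finally show "(\<integral>\<omega>. g \<omega> * (f \<omega> - h \<omega>) \<partial>M) = 0" .
  have "(\<integral>\<omega>. g \<omega> * (h \<omega> - f \<omega>) \<partial>M) = (\<integral>\<omega>. g \<omega> * h \<omega> - g \<omega> * f \<omega> \<partial>M)"
    by (simp add: right_diff_distrib)
  also have "\<dots> = 0" using i1 i2 e by simp
  finally show "(\<integral>\<omega>. g \<omega> * (h \<omega> - f \<omega>) \<partial>M) = 0" .
  have "integrable M (\<lambda>\<omega>. g \<omega> * f \<omega> - g \<omega> * h \<omega>)" using i1 i2 by simp
  then show "integrable M (\<lambda>\<omega>. g \<omega> * (f \<omega> - h \<omega>))" by (simp add: right_diff_distrib)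
qed

lemma sumset_meas:
  fixes M :: "'w measure" and F :: "nat \<Rightarrow> 'w measure" and I d :: "nat \<Rightarrow> 'w \<Rightarrow> real"
  assumes sub: "\<forall>k. subalgebra M (F k)"
  and Im: "\<forall>k\<ge>1. I k \<in> borel_measurable (F k)"
  and dm: "\<forall>k\<ge>1. d k \<in> borel_measurable (F (Suc k))"
  shows "{\<omega>\<in>space M. (\<Sum>k\<in>{1..<t}. I k \<omega>) = real n \<and> u \<le> (\<Sum>k\<in>{1..<t}. I k \<omega> * d k \<omega>)} \<in> sets M"
proof -
  have IM: "I k \<in> borel_measurable M" if "k \<in> {1..<t}" for k
    using measurable_from_subalg[OF sub[rule_format, of k]] Im that by auto
  have dM: "d k \<in> borel_measurable M" if "k \<in> {1..<t}" for k
    using measurable_from_subalg[OF sub[rule_format, of "Suc k"]] dm that by auto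
  have A[measurable]: "(\<lambda>\<omega>. \<Sum>k\<in>{1..<t}. I k \<omega>) \<in> borel_measurable M"
    by (rule borel_measurable_sum) (use IM in auto)
  have B[measurable]: "(\<lambda>\<omega>. \<Sum>k\<in>{1..<t}. I k \<omega> * d k \<omega>) \<in> borel_measurable M"
    by (rule borel_measurable_sum) (use IM dM in auto)
  show ?thesis by measurable
qed

theorem lemma4:
  fixes M :: "'w measure"
    and s :: "nat \<Rightarrow> 'w \<Rightarrow> 's::finite"
    and a :: "nat \<Rightarrow> 'w \<Rightarrow> 'a::finite"
    and r :: "nat \<Rightarrow> 'w \<Rightarrow> real"
    and rbar :: "nat \<Rightarrow> 's \<Rightarrow> 'a \<Rightarrow> real"
    and p :: "nat \<Rightarrow> 's \<Rightarrow> 'a \<Rightarrow> 's pmf"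
    and s1 :: 's and T :: nat and \<delta> :: real
  assumes "prob_space M"
    and "T \<ge> 1" and "0 < \<delta>" and "\<delta> < 1"
    and "\<forall>t x y. rbar t x y \<in> {0..1}"
    and "\<forall>t. s t \<in> measurable M (count_space UNIV)"
    and "\<forall>t. r t \<in> borel_measurable M"
    and "\<forall>t. \<forall>\<omega>\<in>space M. r t \<omega> \<in> {0..1}"
    and "\<forall>\<omega>\<in>space M. s 1 \<omega> = s1"
    and "\<forall>t\<ge>1. a t \<in> measurable (hist_alg M s a r t) (count_space UNIV)"
    and "\<forall>t\<ge>1. \<forall>E\<in>sets (hist_alg M s a r t).
           (\<integral>\<omega>. indicator E \<omega> * r t \<omega> \<partial>M) = (\<integral>\<omega>. indicator E \<omega> * rbar t (s t \<omega>) (a t \<omega>) \<partial>M)"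
    and "\<forall>t\<ge>1. \<forall>E\<in>sets (hist_alg M s a r t). \<forall>x.
           measure M (E \<inter> {\<omega> \<in> space M. s (Suc t) \<omega> = x})
             = (\<integral>\<omega>. indicator E \<omega> * pmf (p t (s t \<omega>) (a t \<omega>)) x \<partial>M)"
  shows "measure M {\<omega> \<in> space M. \<forall>t\<in>{1..T}. \<forall>\<tau>\<in>{1..T}.
            in_plausible \<delta> (reward_variation rbar T) (trans_variation p T) s a r t \<omega> (rbar \<tau>) (p \<tau>)}
         \<ge> 1 - 5 * \<delta> / 6"
proof -
  note ps = assms(1)
  interpret prob_space M by (fact ps)
  define F where "F = (\<lambda>k. hist_alg M s a r k)"
  have subM: "\<forall>k. subalgebra M (F k)"
  proof
    fix k
    show "subalgebra M (F k)" unfolding subalgebra_def F_def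
      using hist_sub_M[OF assms(6) assms(7) assms(10), of k] hist_space[of M s a r k] by simp
  qed
  have mono: "\<forall>k k'. k \<le> k' \<longrightarrow> subalgebra (F k') (F k)"
  proof (intro allI impI)
    fix k k' :: nat assume "k \<le> k'"
    then show "subalgebra (F k') (F k)" unfolding F_def by (rule hist_subalg_mono)
  qed
  have sF: "s \<tau> \<in> measurable (F k) (count_space UNIV)" if "1 \<le> \<tau>" "\<tau> \<le> k" for \<tau> k
    unfolding F_def using that by (rule hist_s_meas)
  have aF: "a \<tau> \<in> measurable (F k) (count_space UNIV)" if "1 \<le> \<tau>" "\<tau> \<le> k" for \<tau> k
    unfolding F_def using assms(10) that by (rule hist_a_meas)
  have rF: "r \<tau> \<in> borel_measurable (F k)" if "1 \<le> \<tau>" "\<tau> < k" for \<tau> k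
    unfolding F_def using that by (rule hist_r_meas)
  have sM: "s \<tau> \<in> measurable M (count_space UNIV)" for \<tau> using assms(6) by blast
  have aM: "a \<tau> \<in> measurable M (count_space UNIV)" if "1 \<le> \<tau>" for \<tau>
    using measurable_from_subalg[OF subM[rule_format, of \<tau>] aF[OF that order_refl]] .
  have rM: "r \<tau> \<in> borel_measurable M" for \<tau> using assms(7) by blast

  define Ind where "Ind = (\<lambda>x y k \<omega>. if s k \<omega> = x \<and> a k \<omega> = y then 1 else (0::real))"
  define dr where "dr = (\<lambda>k \<omega>. r k \<omega> - rbar k (s k \<omega>) (a k \<omega>))"
  define dr' where "dr' = (\<lambda>k \<omega>. rbar k (s k \<omega>) (a k \<omega>) - r k \<omega>)"
  define sg where "sg = (\<lambda>(B::'s set) x'. if x' \<in> B then 1 else (-1::real))"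
  define ind where "ind = (\<lambda>k \<omega> x'. if s (Suc k) \<omega> = x' then 1 else (0::real))"
  define dp where "dp = (\<lambda>B k \<omega>. \<Sum>x'\<in>UNIV. sg B x' * (ind k \<omega> x' - pmf (p k (s k \<omega>) (a k \<omega>)) x'))"

  have Im: "\<forall>k\<ge>1. Ind x y k \<in> borel_measurable (F k)" for x y
  proof (intro allI impI)
    fix k :: nat assume k: "1 \<le> k"
    show "Ind x y k \<in> borel_measurable (F k)"
      using cfun2_meas[OF sF[OF k order_refl] aF[OF k order_refl], of "\<lambda>u v. if u = x \<and> v = y then 1 else 0"]
      unfolding Ind_def by simp
  qed
  have Iv: "\<forall>k \<omega>. Ind x y k \<omega> = 0 \<or> Ind x y k \<omega> = 1" for x y unfolding Ind_def by auto
  have rbF: "(\<lambda>\<omega>. rbar k (s k \<omega>) (a k \<omega>)) \<in> borel_measurable (F k')" if "1 \<le> k" "k \<le> k'" for k k'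
    using cfun2_meas[OF sF[OF that] aF[OF that], of "rbar k"] .
  have pmF: "(\<lambda>\<omega>. pmf (p k (s k \<omega>) (a k \<omega>)) x') \<in> borel_measurable (F k')" if "1 \<le> k" "k \<le> k'" for k k' x'
    using cfun2_meas[OF sF[OF that] aF[OF that], of "\<lambda>u v. pmf (p k u v) x'"] .
  have indF: "(\<lambda>\<omega>. ind k \<omega> x') \<in> borel_measurable (F (Suc k))" for k x'
    using cfun_meas[OF sF[of "Suc k" "Suc k"], of "\<lambda>u. if u = x' then 1 else 0"] unfolding ind_def by simp
  have drm: "\<forall>k\<ge>1. dr k \<in> borel_measurable (F (Suc k))"
    unfolding dr_def by (intro allI impI borel_measurable_diff rF rbF) auto
  have dr'm: "\<forall>k\<ge>1. dr' k \<in> borel_measurable (F (Suc k))"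
    unfolding dr'_def by (intro allI impI borel_measurable_diff rF rbF) auto
  have dpm: "\<forall>k\<ge>1. dp B k \<in> borel_measurable (F (Suc k))" for B
    unfolding dp_def by (intro allI impI borel_measurable_sum borel_measurable_times borel_measurable_const
       borel_measurable_diff indF pmF) auto
  have drb: "\<forall>k\<ge>1. \<forall>\<omega>\<in>space M. \<bar>dr k \<omega>\<bar> \<le> 1"
    proof (intro allI impI ballI)
    fix k :: nat and \<omega> assume "1 \<le> k" "\<omega> \<in> space M"
    then have "0 \<le> r k \<omega>" "r k \<omega> \<le> 1" using assms(8) by auto
    moreover have "0 \<le> rbar k (s k \<omega>) (a k \<omega>)" "rbar k (s k \<omega>) (a k \<omega>) \<le> 1" using assms(5) by auto
    ultimately show "\<bar>dr k \<omega>\<bar> \<le> 1" unfolding dr_def by (simp add: abs_le_iff)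
  qed
  have dr'b: "\<forall>k\<ge>1. \<forall>\<omega>\<in>space M. \<bar>dr' k \<omega>\<bar> \<le> 1"
    proof (intro allI impI ballI)
    fix k :: nat and \<omega> assume "1 \<le> k" "\<omega> \<in> space M"
    then have "0 \<le> r k \<omega>" "r k \<omega> \<le> 1" using assms(8) by auto
    moreover have "0 \<le> rbar k (s k \<omega>) (a k \<omega>)" "rbar k (s k \<omega>) (a k \<omega>) \<le> 1" using assms(5) by auto
    ultimately show "\<bar>dr' k \<omega>\<bar> \<le> 1" unfolding dr'_def by (simp add: abs_le_iff)
  qed
  have sg1: "\<bar>sg B x'\<bar> = 1" for B x' unfolding sg_def by simp
  have dpb: "\<forall>k\<ge>1. \<forall>\<omega>\<in>space M. \<bar>dp B k \<omega>\<bar> \<le> 2" for B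
  proof (intro allI impI ballI)
    fix k :: nat and \<omega> assume "1 \<le> k" "\<omega> \<in> space M"
    have "\<bar>dp B k \<omega>\<bar> \<le> (\<Sum>x'\<in>UNIV. \<bar>sg B x' * (ind k \<omega> x' - pmf (p k (s k \<omega>) (a k \<omega>)) x')\<bar>)"
      unfolding dp_def by (rule sum_abs)
    also have "\<dots> \<le> (\<Sum>x'\<in>UNIV. ind k \<omega> x' + pmf (p k (s k \<omega>) (a k \<omega>)) x')"
    proof (rule sum_mono)
      fix x'
      have "0 \<le> ind k \<omega> x'" unfolding ind_def by simp
      moreover have "0 \<le> pmf (p k (s k \<omega>) (a k \<omega>)) x'" by simp
      ultimately show "\<bar>sg B x' * (ind k \<omega> x' - pmf (p k (s k \<omega>) (a k \<omega>)) x')\<bar> \<le> ind k \<omega> x' + pmf (p k (s k \<omega>) (a k \<omega>)) x'"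
        by (simp add: abs_mult sg1 abs_le_iff)
    qed
    also have "\<dots> = (\<Sum>x'\<in>UNIV. ind k \<omega> x') + (\<Sum>x'\<in>UNIV. pmf (p k (s k \<omega>) (a k \<omega>)) x')"
      by (rule sum.distrib)
    also have "(\<Sum>x'\<in>UNIV. ind k \<omega> x') = 1" unfolding ind_def by simp
    also have "(\<Sum>x'\<in>UNIV. pmf (p k (s k \<omega>) (a k \<omega>)) x') = 1" by (rule sum_pmf_eq_1) auto
    finally show "\<bar>dp B k \<omega>\<bar> \<le> 2" by simp
  qed
  have dro: "\<forall>k\<ge>1. \<forall>g Bg. g \<in> borel_measurable (F k) \<longrightarrow> (\<forall>\<omega>\<in>space M. \<bar>g \<omega>\<bar> \<le> Bg)
              \<longrightarrow> (\<integral>\<omega>. g \<omega> * dr k \<omega> \<partial>M) = 0"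
    unfolding dr_def
  proof (intro allI impI)
    fix k :: nat and g :: "'w \<Rightarrow> real" and Bg assume k: "1 \<le> k" and g: "g \<in> borel_measurable (F k)" "\<forall>\<omega>\<in>space M. \<bar>g \<omega>\<bar> \<le> Bg"
    show "(\<integral>\<omega>. g \<omega> * (r k \<omega> - rbar k (s k \<omega>) (a k \<omega>)) \<partial>M) = 0"
      by (rule orth_diff(1)[OF ps subM[rule_format, of k] rM rbF[OF k order_refl] _ _ _ g, where Bf=1 and Bh=1])
         (use assms(5,8,11) k in \<open>auto simp: F_def\<close>)
  qed
  have dr'o: "\<forall>k\<ge>1. \<forall>g Bg. g \<in> borel_measurable (F k) \<longrightarrow> (\<forall>\<omega>\<in>space M. \<bar>g \<omega>\<bar> \<le> Bg)
              \<longrightarrow> (\<integral>\<omega>. g \<omega> * dr' k \<omega> \<partial>M) = 0"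
    unfolding dr'_def
  proof (intro allI impI)
    fix k :: nat and g :: "'w \<Rightarrow> real" and Bg assume k: "1 \<le> k" and g: "g \<in> borel_measurable (F k)" "\<forall>\<omega>\<in>space M. \<bar>g \<omega>\<bar> \<le> Bg"
    show "(\<integral>\<omega>. g \<omega> * (rbar k (s k \<omega>) (a k \<omega>) - r k \<omega>) \<partial>M) = 0"
      by (rule orth_diff(2)[OF ps subM[rule_format, of k] rM rbF[OF k order_refl] _ _ _ g, where Bf=1 and Bh=1])
         (use assms(5,8,11) k in \<open>auto simp: F_def\<close>)
  qed
  have dpo: "\<forall>k\<ge>1. \<forall>g Bg. g \<in> borel_measurable (F k) \<longrightarrow> (\<forall>\<omega>\<in>space M. \<bar>g \<omega>\<bar> \<le> Bg)
              \<longrightarrow> (\<integral>\<omega>. g \<omega> * dp B k \<omega> \<partial>M) = 0" for B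
  proof (intro allI impI)
    fix k :: nat and g :: "'w \<Rightarrow> real" and Bg assume k: "1 \<le> k" and g: "g \<in> borel_measurable (F k)" "\<forall>\<omega>\<in>space M. \<bar>g \<omega>\<bar> \<le> Bg"
    have indM: "(\<lambda>\<omega>. ind k \<omega> x') \<in> borel_measurable M" for x'
      using measurable_from_subalg[OF subM[rule_format, of "Suc k"] indF] .
    have each: "(\<integral>\<omega>. (sg B x' * g \<omega>) * (ind k \<omega> x' - pmf (p k (s k \<omega>) (a k \<omega>)) x') \<partial>M) = 0
       \<and> integrable M (\<lambda>\<omega>. (sg B x' * g \<omega>) * (ind k \<omega> x' - pmf (p k (s k \<omega>) (a k \<omega>)) x'))" for x'
    proof -
      have gm': "(\<lambda>\<omega>. sg B x' * g \<omega>) \<in> borel_measurable (F k)" using g(1) by simp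
      have gb': "\<forall>\<omega>\<in>space M. \<bar>sg B x' * g \<omega>\<bar> \<le> Bg" using g(2) by (simp add: abs_mult sg1)
      have fb: "\<forall>\<omega>\<in>space M. \<bar>ind k \<omega> x'\<bar> \<le> 1" unfolding ind_def by simp
      have hb: "\<forall>\<omega>\<in>space M. \<bar>pmf (p k (s k \<omega>) (a k \<omega>)) x'\<bar> \<le> 1" by (simp add: pmf_le_1)
      have eq: "\<forall>E\<in>sets (F k). (\<integral>\<omega>. indicator E \<omega> * ind k \<omega> x' \<partial>M) = (\<integral>\<omega>. indicator E \<omega> * pmf (p k (s k \<omega>) (a k \<omega>)) x' \<partial>M)"
      proof
        fix E assume E: "E \<in> sets (F k)"
        then have EM: "E \<in> sets M" using subM unfolding subalgebra_def by blast
        have "(\<integral>\<omega>. indicator E \<omega> * ind k \<omega> x' \<partial>M) = (\<integral>\<omega>. indicator (E \<inter> {\<omega> \<in> space M. s (Suc k) \<omega> = x'}) \<omega> \<partial>M)"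
          by (rule Bochner_Integration.integral_cong) (auto simp: ind_def indicator_def)
        also have "\<dots> = measure M (E \<inter> {\<omega> \<in> space M. s (Suc k) \<omega> = x'} \<inter> space M)"
          by (rule Bochner_Integration.integral_indicator)
        also have "E \<inter> {\<omega> \<in> space M. s (Suc k) \<omega> = x'} \<inter> space M = E \<inter> {\<omega> \<in> space M. s (Suc k) \<omega> = x'}" by auto
        also have "measure M (E \<inter> {\<omega> \<in> space M. s (Suc k) \<omega> = x'}) = (\<integral>\<omega>. indicator E \<omega> * pmf (p k (s k \<omega>) (a k \<omega>)) x' \<partial>M)"
          using assms(12) k E unfolding F_def by blast
        finally show "(\<integral>\<omega>. indicator E \<omega> * ind k \<omega> x' \<partial>M) = (\<integral>\<omega>. indicator E \<omega> * pmf (p k (s k \<omega>) (a k \<omega>)) x' \<partial>M)" .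
      qed
      show ?thesis
        using orth_diff(1,3)[OF ps subM[rule_format, of k] indM pmF[OF k order_refl] fb hb eq gm' gb'] by simp
    qed
    have "(\<integral>\<omega>. g \<omega> * dp B k \<omega> \<partial>M) = (\<integral>\<omega>. (\<Sum>x'\<in>UNIV. (sg B x' * g \<omega>) * (ind k \<omega> x' - pmf (p k (s k \<omega>) (a k \<omega>)) x')) \<partial>M)"
      unfolding dp_def by (simp add: sum_distrib_left mult.assoc mult.left_commute)
    also have "\<dots> = (\<Sum>x'\<in>UNIV. (\<integral>\<omega>. (sg B x' * g \<omega>) * (ind k \<omega> x' - pmf (p k (s k \<omega>) (a k \<omega>)) x') \<partial>M))"
      by (rule Bochner_Integration.integral_sum[where f="\<lambda>x' \<omega>. (sg B x' * g \<omega>) * (ind k \<omega> x' - pmf (p k (s k \<omega>) (a k \<omega>)) x')"]) (use each in blast)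
    also have "\<dots> = 0" using each by simp
    finally show "(\<integral>\<omega>. g \<omega> * dp B k \<omega> \<partial>M) = 0" .
  qed
  define S where "S = real CARD('s)"
  define A where "A = real CARD('a)"
  have S1: "1 \<le> S" unfolding S_def by (simp add: Suc_le_eq)
  have A1: "1 \<le> A" unfolding A_def by (simp add: Suc_le_eq)
  define L where "L = (\<lambda>t::nat. ln (8 * real CARD('s) * real CARD('a) * real t ^ 3 / \<delta>))"
  define W where "W = (\<lambda>t::nat. \<delta> / (8 * S * A * real t ^ 3))"
  have Xge: "8 \<le> 8 * S * A * real t ^ 3 / \<delta>" if "1 \<le> t" for t
  proof -
    have "1 \<le> real t ^ 3" using that by simp
    have "1 * 1 \<le> S * A" by (rule mult_mono) (use S1 A1 in auto)
    then have "1 * 1 \<le> (S * A) * real t ^ 3" using \<open>1 \<le> real t ^ 3\<close> by (intro mult_mono) auto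
    then have "1 \<le> S * A * real t ^ 3" by simp
    then have "8 \<le> 8 * S * A * real t ^ 3" by linarith
    also have "\<dots> \<le> 8 * S * A * real t ^ 3 / \<delta>"
    proof -
      have X0: "0 \<le> 8 * S * A * real t ^ 3" using \<open>8 \<le> 8 * S * A * real t ^ 3\<close> by linarith
      have "(8 * S * A * real t ^ 3) * \<delta> \<le> (8 * S * A * real t ^ 3) * 1"
        by (rule mult_left_mono) (use assms(4) X0 in auto)
      then show ?thesis using assms(3) by (simp add: le_divide_eq)
    qed
    finally show ?thesis .
  qed
  have Wpos: "0 < W t" if "1 \<le> t" for t unfolding W_def using assms(3) S1 A1 that by simp
  have W8: "W t \<le> 1/8" if "1 \<le> t" for t
  proof -
    have "W t = 1 / (8 * S * A * real t ^ 3 / \<delta>)" unfolding W_def by simp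
    also have "\<dots> \<le> 1 / 8" using Xge[OF that] by (intro divide_left_mono) auto
    finally show ?thesis .
  qed
  have L1: "1 \<le> L t" if "1 \<le> t" for t
  proof -
    have "exp 1 \<le> (8::real)" using exp_le by simp
    also have "\<dots> \<le> 8 * S * A * real t ^ 3 / \<delta>" by (rule Xge[OF that])
    finally have "exp 1 \<le> 8 * S * A * real t ^ 3 / \<delta>" .
    then show ?thesis unfolding L_def S_def A_def using ln_ge_iff[of "8 * real CARD('s) * real CARD('a) * real t ^ 3 / \<delta>" 1] Xge[OF that]
      unfolding S_def A_def by simp
  qed
  have WL: "exp (- L t) = W t" if "1 \<le> t" for t
  proof -
    have pos: "0 < 8 * S * A * real t ^ 3 / \<delta>" using Xge[OF that] by simp
    have "exp (- L t) = 1 / (8 * S * A * real t ^ 3 / \<delta>)"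
      unfolding L_def S_def A_def using pos unfolding S_def A_def by (simp add: exp_minus inverse_eq_divide)
    then show ?thesis unfolding W_def by simp
  qed
  define u1 where "u1 = (\<lambda>t (n::nat). real n * sqrt (8 * L t / real n))"
  define u3 where "u3 = (\<lambda>t (n::nat). real n * sqrt (8 * real CARD('s) * L t / real n))"
  define E1 where "E1 = (\<lambda>t x y n. {\<omega>\<in>space M. (\<Sum>k\<in>{1..<t}. Ind x y k \<omega>) = real n \<and> u1 t n \<le> (\<Sum>k\<in>{1..<t}. Ind x y k \<omega> * dr k \<omega>)})"
  define E2 where "E2 = (\<lambda>t x y n. {\<omega>\<in>space M. (\<Sum>k\<in>{1..<t}. Ind x y k \<omega>) = real n \<and> u1 t n \<le> (\<Sum>k\<in>{1..<t}. Ind x y k \<omega> * dr' k \<omega>)})"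
  define E3 where "E3 = (\<lambda>t x y n B. {\<omega>\<in>space M. (\<Sum>k\<in>{1..<t}. Ind x y k \<omega>) = real n \<and> u3 t n \<le> (\<Sum>k\<in>{1..<t}. Ind x y k \<omega> * dp B k \<omega>)})"
  define E where "E = (\<lambda>t x y n. E1 t x y n \<union> E2 t x y n \<union> (\<Union>B\<in>Pow UNIV. E3 t x y n B))"
  have E1m: "E1 t x y n \<in> sets M" for t x y n unfolding E1_def by (rule sumset_meas[OF subM Im drm])
  have E2m: "E2 t x y n \<in> sets M" for t x y n unfolding E2_def by (rule sumset_meas[OF subM Im dr'm])
  have E3m: "E3 t x y n B \<in> sets M" for t x y n B unfolding E3_def by (rule sumset_meas[OF subM Im dpm])
  have Em: "E t x y n \<in> sets M" for t x y n
    unfolding E_def using E1m E2m E3m by (intro sets.Un sets.finite_UN) auto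
  have u1sq: "(u1 t n)^2 / (2 * 1^2 * real n) = 4 * L t" if "1 \<le> t" "1 \<le> n" for t n
  proof -
    have "0 \<le> 8 * L t / real n" using L1[OF that(1)] by simp
    then have "(u1 t n)^2 = real n ^ 2 * (8 * L t / real n)" unfolding u1_def by (simp add: power_mult_distrib)
    then show ?thesis using that by (simp add: field_simps power2_eq_square)
  qed
  have u3sq: "(u3 t n)^2 / (2 * 2^2 * real n) = S * L t" if "1 \<le> t" "1 \<le> n" for t n
  proof -
    have "0 \<le> 8 * real CARD('s) * L t / real n" using L1[OF that(1)] by simp
    then have "(u3 t n)^2 = real n ^ 2 * (8 * real CARD('s) * L t / real n)" unfolding u3_def by (simp add: power_mult_distrib)
    then show ?thesis using that unfolding S_def by (simp add: field_simps power2_eq_square)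
  qed
  have u1pos: "0 < u1 t n" if "1 \<le> t" "1 \<le> n" for t n
    unfolding u1_def using L1[OF that(1)] that by simp
  have u3pos: "0 < u3 t n" if "1 \<le> t" "1 \<le> n" for t n
    unfolding u3_def using L1[OF that(1)] that by simp
  have m1: "measure M (E1 t x y n) \<le> W t ^ 4" if "1 \<le> t" "1 \<le> n" for t x y n
  proof -
    have "measure M (E1 t x y n) \<le> exp (-((u1 t n)^2 / (2 * 1^2 * real n)))"
      unfolding E1_def by (rule tail_bound[OF ps subM mono Im Iv drm drb _ dro that(1) _ u1pos[OF that]]) (use that in auto)
    also have "\<dots> = exp (real 4 * (- L t))" using u1sq[OF that] by simp
    also have "\<dots> = W t ^ 4" unfolding exp_of_nat_mult WL[OF that(1)] ..
    finally show ?thesis .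
  qed
  have m2: "measure M (E2 t x y n) \<le> W t ^ 4" if "1 \<le> t" "1 \<le> n" for t x y n
  proof -
    have "measure M (E2 t x y n) \<le> exp (-((u1 t n)^2 / (2 * 1^2 * real n)))"
      unfolding E2_def by (rule tail_bound[OF ps subM mono Im Iv dr'm dr'b _ dr'o that(1) _ u1pos[OF that]]) (use that in auto)
    also have "\<dots> = exp (real 4 * (- L t))" using u1sq[OF that] by simp
    also have "\<dots> = W t ^ 4" unfolding exp_of_nat_mult WL[OF that(1)] ..
    finally show ?thesis .
  qed
  have m3: "measure M (E3 t x y n B) \<le> W t ^ CARD('s)" if "1 \<le> t" "1 \<le> n" for t x y n B
  proof -
    have "measure M (E3 t x y n B) \<le> exp (-((u3 t n)^2 / (2 * 2^2 * real n)))"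
      unfolding E3_def by (rule tail_bound[OF ps subM mono Im Iv dpm dpb _ dpo that(1) _ u3pos[OF that]]) (use that in auto)
    also have "\<dots> = exp (real CARD('s) * (- L t))" using u3sq[OF that] unfolding S_def by simp
    also have "\<dots> = W t ^ CARD('s)" unfolding exp_of_nat_mult WL[OF that(1)] ..
    finally show ?thesis .
  qed
  have Eb: "measure M (E t x y n) \<le> 4 * W t" if "1 \<le> t" "1 \<le> n" for t x y n
  proof -
    have W0: "0 \<le> W t" "W t \<le> 1" using Wpos[OF that(1)] W8[OF that(1)] by auto
    have "measure M (E t x y n) \<le> measure M (E1 t x y n \<union> E2 t x y n) + measure M (\<Union>B\<in>Pow UNIV. E3 t x y n B)"
      unfolding E_def by (rule measure_Un_le) (use E1m E2m E3m in auto)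
    also have "\<dots> \<le> (measure M (E1 t x y n) + measure M (E2 t x y n)) + (\<Sum>B\<in>Pow UNIV. measure M (E3 t x y n B))"
      by (intro add_mono measure_Un_le measure_UNION_le) (use E1m E2m E3m in auto)
    also have "\<dots> \<le> (W t ^ 4 + W t ^ 4) + (\<Sum>B\<in>Pow (UNIV::'s set). W t ^ CARD('s))"
      by (intro add_mono sum_mono m1 m2 m3 that)
    also have "(\<Sum>B\<in>Pow (UNIV::'s set). W t ^ CARD('s)) = (2 * W t) ^ CARD('s)"
      by (simp add: card_Pow power_mult_distrib)
    also have "(2 * W t) ^ CARD('s) \<le> (2 * W t) ^ 1"
      by (rule power_decreasing) (use W0 W8[OF that(1)] in auto)
    also have "W t ^ 4 \<le> W t ^ 1"
      by (rule power_decreasing) (use W0 in auto)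
    finally show ?thesis by simp
  qed
  define Bad where "Bad = (\<Union>t\<in>{1..T}. \<Union>x\<in>UNIV. \<Union>y\<in>UNIV. \<Union>n\<in>{1..<t}. E t x y n)"
  have Badm: "Bad \<in> sets M" unfolding Bad_def using Em by (intro sets.finite_UN) auto
  have Bt: "measure M (\<Union>x\<in>UNIV. \<Union>y\<in>UNIV. \<Union>n\<in>{1..<t}. E t x y n) \<le> \<delta> / 2 * ((real t - 1) / real t ^ 3)"
    if t: "1 \<le> t" for t
  proof -
    have "measure M (\<Union>x\<in>UNIV. \<Union>y\<in>UNIV. \<Union>n\<in>{1..<t}. E t x y n)
        \<le> (\<Sum>x\<in>UNIV. measure M (\<Union>y\<in>UNIV. \<Union>n\<in>{1..<t}. E t x y n))"
      by (rule measure_UNION_le) (use Em in auto)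
    also have "\<dots> \<le> (\<Sum>x\<in>(UNIV::'s set). \<Sum>y\<in>(UNIV::'a set). measure M (\<Union>n\<in>{1..<t}. E t x y n))"
      by (intro sum_mono measure_UNION_le) (use Em in auto)
    also have "\<dots> \<le> (\<Sum>x\<in>(UNIV::'s set). \<Sum>y\<in>(UNIV::'a set). \<Sum>n\<in>{1..<t}. measure M (E t x y n))"
      by (intro sum_mono measure_UNION_le) (use Em in auto)
    also have "\<dots> \<le> (\<Sum>x\<in>(UNIV::'s set). \<Sum>y\<in>(UNIV::'a set). \<Sum>n\<in>{1..<t}. 4 * W t)"
      by (intro sum_mono Eb t) auto
    also have "\<dots> = S * A * (real t - 1) * (4 * W t)"
      using t unfolding S_def A_def by (simp add: of_nat_diff)
    also have "\<dots> = \<delta> / 2 * ((real t - 1) / real t ^ 3)"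
      unfolding W_def using S1 A1 t by (simp add: field_simps)
    finally show ?thesis .
  qed
  have Badb: "measure M Bad \<le> \<delta> / 2"
  proof -
    have "measure M Bad \<le> (\<Sum>t\<in>{1..T}. measure M (\<Union>x\<in>UNIV. \<Union>y\<in>UNIV. \<Union>n\<in>{1..<t}. E t x y n))"
      unfolding Bad_def by (rule measure_UNION_le) (use Em in \<open>auto intro!: sets.finite_UN\<close>)
    also have "\<dots> \<le> (\<Sum>t\<in>{1..T}. \<delta> / 2 * ((real t - 1) / real t ^ 3))"
      by (intro sum_mono Bt) auto
    also have "\<dots> = \<delta> / 2 * (\<Sum>t\<in>{1..T}. (real t - 1) / real t ^ 3)"
      by (simp add: sum_distrib_left)
    also have "\<dots> \<le> \<delta> / 2 * 1"
    proof (rule mult_left_mono)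
      show "(\<Sum>t\<in>{1..T}. (real t - 1) / real t ^ 3) \<le> 1"
      proof -
        have "0 \<le> 1 / (real T + 1)" by simp
        then show ?thesis using sum_t3[of T] by linarith
      qed
    qed (use assms(3) in auto)
    finally show ?thesis by simp
  qed
  define G0 where "G0 = {\<omega> \<in> space M. \<forall>t\<in>{1..T}. \<forall>\<tau>\<in>{1..T}.
            in_plausible \<delta> (reward_variation rbar T) (trans_variation p T) s a r t \<omega> (rbar \<tau>) (p \<tau>)}"
  have vcM: "(\<lambda>\<omega>. real (visit_count s a t \<omega> x y)) \<in> borel_measurable M" for t x y
  proof -
    have "(\<lambda>\<omega>. \<Sum>k\<in>{1..<t}. (if s k \<omega> = x \<and> a k \<omega> = y then 1 else 0) :: real) \<in> borel_measurable M"
    proof (rule borel_measurable_sum)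
      fix k assume "k \<in> {1..<t}"
      then have k: "1 \<le> k" by simp
      show "(\<lambda>\<omega>. (if s k \<omega> = x \<and> a k \<omega> = y then 1 else 0) :: real) \<in> borel_measurable M"
        using cfun2_meas[OF sM aM[OF k], of "\<lambda>u v. if u = x \<and> v = y then 1 else 0"] by simp
    qed
    moreover have "real (visit_count s a t \<omega> x y) = (\<Sum>k\<in>{1..<t}. (if s k \<omega> = x \<and> a k \<omega> = y then 1 else 0) :: real)" for \<omega>
      unfolding visit_count_def by (rule sum_ind_card[symmetric]) simp
    ultimately show ?thesis by (simp only:)
  qed
  have erM: "(\<lambda>\<omega>. emp_reward s a r t \<omega> x y) \<in> borel_measurable M" for t x y
  proof -
    have num: "(\<lambda>\<omega>. \<Sum>k\<in>{1..<t}. (if s k \<omega> = x \<and> a k \<omega> = y then 1 else 0) * r k \<omega>) \<in> borel_measurable M"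
    proof (rule borel_measurable_sum)
      fix k assume "k \<in> {1..<t}"
      then have k: "1 \<le> k" by simp
      show "(\<lambda>\<omega>. (if s k \<omega> = x \<and> a k \<omega> = y then 1 else 0) * r k \<omega>) \<in> borel_measurable M"
        using cfun2_meas[OF sM aM[OF k], of "\<lambda>u v. if u = x \<and> v = y then 1 else 0"] rM[of k]
        by (intro borel_measurable_times) simp_all
    qed
    have e: "emp_reward s a r t \<omega> x y = (\<Sum>k\<in>{1..<t}. (if s k \<omega> = x \<and> a k \<omega> = y then 1 else 0) * r k \<omega>) / max 1 (real (visit_count s a t \<omega> x y))" for \<omega>
      unfolding emp_reward_def by (simp add: sum_ind_filter)
    show ?thesis unfolding e by (intro borel_measurable_divide num borel_measurable_max borel_measurable_const vcM)
  qed
  have etM: "(\<lambda>\<omega>. emp_trans s a t \<omega> x y x') \<in> borel_measurable M" for t x y x'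
  proof -
    have num: "(\<lambda>\<omega>. \<Sum>k\<in>{1..<t}. (if s k \<omega> = x \<and> a k \<omega> = y \<and> s (Suc k) \<omega> = x' then 1 else 0) :: real) \<in> borel_measurable M"
    proof (rule borel_measurable_sum)
      fix k assume "k \<in> {1..<t}"
      then have k: "1 \<le> k" by simp
      show "(\<lambda>\<omega>. (if s k \<omega> = x \<and> a k \<omega> = y \<and> s (Suc k) \<omega> = x' then 1 else 0) :: real) \<in> borel_measurable M"
        using cfun3_meas[OF sM aM[OF k] sM, of "\<lambda>u v w. if u = x \<and> v = y \<and> w = x' then 1 else 0"] by simp
    qed
    have e: "emp_trans s a t \<omega> x y x' = (\<Sum>k\<in>{1..<t}. (if s k \<omega> = x \<and> a k \<omega> = y \<and> s (Suc k) \<omega> = x' then 1 else 0) :: real) / max 1 (real (visit_count s a t \<omega> x y))" for \<omega>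
      unfolding emp_trans_def by (simp add: sum_ind_card)
    show ?thesis unfolding e by (intro borel_measurable_divide num borel_measurable_max borel_measurable_const vcM)
  qed
  define Vr where "Vr = reward_variation rbar T"
  define Vp where "Vp = trans_variation p T"
  define R where "R = (\<lambda>t \<tau> x y. {\<omega>\<in>space M. \<bar>rbar \<tau> x y - emp_reward s a r t \<omega> x y\<bar>
          \<le> Vr + sqrt (8 * ln (8 * real CARD('s) * real CARD('a) * real t ^ 3 / \<delta>)
                        / max 1 (real (visit_count s a t \<omega> x y)))})"
  define Q where "Q = (\<lambda>t \<tau> x y. {\<omega>\<in>space M. (\<Sum>x'\<in>UNIV. \<bar>pmf (p \<tau> x y) x' - emp_trans s a t \<omega> x y x'\<bar>)
          \<le> Vp + sqrt (8 * real CARD('s) * ln (8 * real CARD('s) * real CARD('a) * real t ^ 3 / \<delta>)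
                        / max 1 (real (visit_count s a t \<omega> x y)))})"
  have Rm: "R t \<tau> x y \<in> sets M" for t \<tau> x y
    unfolding R_def
    by (rule borel_measurable_le; intro borel_measurable_abs borel_measurable_diff borel_measurable_const erM
         borel_measurable_add measurable_compose[OF _ borel_measurable_sqrt] borel_measurable_divide
         borel_measurable_max vcM)
  have Qm: "Q t \<tau> x y \<in> sets M" for t \<tau> x y
    unfolding Q_def
    by (rule borel_measurable_le; intro borel_measurable_sum borel_measurable_abs borel_measurable_diff borel_measurable_const etM
         borel_measurable_add measurable_compose[OF _ borel_measurable_sqrt] borel_measurable_divide
         borel_measurable_max vcM)
  have Geq: "G0 = space M - (\<Union>t\<in>{1..T}. \<Union>\<tau>\<in>{1..T}. \<Union>x\<in>UNIV. \<Union>y\<in>UNIV. (space M - R t \<tau> x y) \<union> (space M - Q t \<tau> x y))"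
    unfolding G0_def in_plausible_def R_def Q_def Vr_def Vp_def by blast
  have Gm: "G0 \<in> sets M"
    unfolding Geq using Rm Qm by (intro sets.Diff sets.top sets.finite_UN sets.Un) auto
  have maxge: "\<bar>f k x0 y0\<bar> \<le> Max ((\<lambda>(x, y). \<bar>f k x y\<bar>) ` UNIV)" for f :: "nat \<Rightarrow> 's \<Rightarrow> 'a \<Rightarrow> real" and k x0 y0
    by (rule Max_ge) (simp, rule image_eqI[where x="(x0,y0)"], auto)
  have Vr0: "0 \<le> Vr" unfolding Vr_def reward_variation_def
  proof (rule sum_nonneg)
    fix k show "0 \<le> Max ((\<lambda>(x, y). \<bar>rbar (Suc k) x y - rbar k x y\<bar>) ` UNIV)"
      using order_trans[OF abs_ge_zero maxge[of "\<lambda>k x y. rbar (Suc k) x y - rbar k x y" k s1 "undefined"]] by simp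
  qed
  have Vp0: "0 \<le> Vp" unfolding Vp_def trans_variation_def
  proof (rule sum_nonneg)
    fix k
    have "0 \<le> \<bar>\<Sum>x'\<in>UNIV. \<bar>pmf (p (Suc k) s1 undefined) x' - pmf (p k s1 undefined) x'\<bar>\<bar>" by simp
    also have "\<dots> \<le> Max ((\<lambda>(x, y). \<bar>\<Sum>x'\<in>UNIV. \<bar>pmf (p (Suc k) x y) x' - pmf (p k x y) x'\<bar>\<bar>) ` UNIV)"
      by (rule maxge[of "\<lambda>k x y. \<Sum>x'\<in>UNIV. \<bar>pmf (p (Suc k) x y) x' - pmf (p k x y) x'\<bar>"])
    finally show "0 \<le> Max ((\<lambda>(x, y). \<Sum>x'\<in>UNIV. \<bar>pmf (p (Suc k) x y) x' - pmf (p k x y) x'\<bar>) ` UNIV)"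
      by (simp add: sum_nonneg)
  qed
  have varR: "\<bar>rbar \<tau> x y - rbar k x y\<bar> \<le> Vr" if "1 \<le> k" "k \<le> T" "1 \<le> \<tau>" "\<tau> \<le> T" for \<tau> k x y
  proof -
    have "\<bar>rbar \<tau> x y - rbar k x y\<bar> \<le> (\<Sum>k\<in>{1..<T}. Max ((\<lambda>(x, y). \<bar>rbar (Suc k) x y - rbar k x y\<bar>) ` UNIV))"
    proof (rule telesc2[where D="\<lambda>u v. \<bar>u - v\<bar>" and g="\<lambda>k. rbar k x y", OF _ _ _ that])
      fix k show "\<bar>rbar (Suc k) x y - rbar k x y\<bar> \<le> Max ((\<lambda>(x, y). \<bar>rbar (Suc k) x y - rbar k x y\<bar>) ` UNIV)"
        using maxge[of "\<lambda>k x y. rbar (Suc k) x y - rbar k x y" k x y] by simp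
    qed auto
    then show ?thesis unfolding Vr_def reward_variation_def .
  qed
  have varP: "(\<Sum>x'\<in>UNIV. \<bar>pmf (p \<tau> x y) x' - pmf (p k x y) x'\<bar>) \<le> Vp" if "1 \<le> k" "k \<le> T" "1 \<le> \<tau>" "\<tau> \<le> T" for \<tau> k x y
  proof -
    have "(\<lambda>u v. \<Sum>x'\<in>UNIV. \<bar>u x' - v x'\<bar>) (\<lambda>x'. pmf (p \<tau> x y) x') (\<lambda>x'. pmf (p k x y) x')
       \<le> (\<Sum>k\<in>{1..<T}. Max ((\<lambda>(x, y). \<Sum>x'\<in>UNIV. \<bar>pmf (p (Suc k) x y) x' - pmf (p k x y) x'\<bar>) ` UNIV))"
    proof (rule telesc2[where D="\<lambda>u v. \<Sum>x'\<in>UNIV. \<bar>u x' - v x'\<bar>" and g="\<lambda>k x'. pmf (p k x y) x'", OF _ _ _ that])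
      fix u v w :: "'s \<Rightarrow> real"
      have "(\<Sum>x'\<in>UNIV. \<bar>u x' - w x'\<bar>) \<le> (\<Sum>x'\<in>UNIV. \<bar>u x' - v x'\<bar> + \<bar>v x' - w x'\<bar>)"
        by (rule sum_mono) arith
      then show "(\<Sum>x'\<in>UNIV. \<bar>u x' - w x'\<bar>) \<le> (\<Sum>x'\<in>UNIV. \<bar>u x' - v x'\<bar>) + (\<Sum>x'\<in>UNIV. \<bar>v x' - w x'\<bar>)"
        by (simp add: sum.distrib)
    next
      fix u v :: "'s \<Rightarrow> real"
      show "(\<Sum>x'\<in>UNIV. \<bar>u x' - v x'\<bar>) = (\<Sum>x'\<in>UNIV. \<bar>v x' - u x'\<bar>)" by (simp add: abs_minus_commute)
    next
      fix k
      have "\<bar>\<Sum>x'\<in>UNIV. \<bar>pmf (p (Suc k) x y) x' - pmf (p k x y) x'\<bar>\<bar>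
          \<le> Max ((\<lambda>(x, y). \<bar>\<Sum>x'\<in>UNIV. \<bar>pmf (p (Suc k) x y) x' - pmf (p k x y) x'\<bar>\<bar>) ` UNIV)"
        by (rule maxge[of "\<lambda>k x y. \<Sum>x'\<in>UNIV. \<bar>pmf (p (Suc k) x y) x' - pmf (p k x y) x'\<bar>"])
      then show "(\<Sum>x'\<in>UNIV. \<bar>pmf (p (Suc k) x y) x' - pmf (p k x y) x'\<bar>)
          \<le> Max ((\<lambda>(x, y). \<Sum>x'\<in>UNIV. \<bar>pmf (p (Suc k) x y) x' - pmf (p k x y) x'\<bar>) ` UNIV)"
        by (simp add: sum_nonneg)
    qed auto
    then show ?thesis unfolding Vp_def trans_variation_def by simp
  qed
  have Gsub: "space M - Bad \<subseteq> G0"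
  proof
    fix \<omega> assume \<omega>: "\<omega> \<in> space M - Bad"
    then have \<omega>s: "\<omega> \<in> space M" and nB: "\<omega> \<notin> Bad" by auto
    have "\<omega> \<in> R t \<tau> x y \<and> \<omega> \<in> Q t \<tau> x y" if t: "t \<in> {1..T}" and \<tau>: "\<tau> \<in> {1..T}" for t \<tau> x y
    proof -
      define V where "V = {k\<in>{1..<t}. s k \<omega> = x \<and> a k \<omega> = y}"
      define N where "N = card V"
      have Vf: "finite V" unfolding V_def by simp
      have vc: "visit_count s a t \<omega> x y = N" unfolding N_def V_def visit_count_def ..
      have er: "emp_reward s a r t \<omega> x y = (\<Sum>k\<in>V. r k \<omega>) / max 1 (real N)"
        unfolding emp_reward_def vc unfolding V_def ..
      have et: "emp_trans s a t \<omega> x y x' = (\<Sum>k\<in>V. ind k \<omega> x') / max 1 (real N)" for x'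
      proof -
        have "{\<tau>\<in>{1..<t}. s \<tau> \<omega> = x \<and> a \<tau> \<omega> = y \<and> s (Suc \<tau>) \<omega> = x'} = {k\<in>V. s (Suc k) \<omega> = x'}"
          unfolding V_def by auto
        then show ?thesis unfolding emp_trans_def vc ind_def using sum_ind_card[OF Vf, of "\<lambda>k. s (Suc k) \<omega> = x'"] by simp
      qed
      have Lt: "1 \<le> L t" using L1 t by auto
      have Vin: "1 \<le> k \<and> k \<le> T" if "k \<in> V" for k using that t unfolding V_def by auto
      show ?thesis
      proof (cases "N = 0")
        case True
        then have V0: "V = {}" using Vf N_def by simp
        have sq1: "1 \<le> sqrt (8 * L t / max 1 (real N))" using True Lt by simp
        have sq2: "1 \<le> sqrt (8 * real CARD('s) * L t / max 1 (real N))"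
        proof -
          have c8: "1 \<le> 8 * real CARD('s)" using S1 unfolding S_def by linarith
          have "1 * 1 \<le> (8 * real CARD('s)) * L t" by (rule mult_mono) (use Lt c8 in auto)
          then have "1 \<le> 8 * real CARD('s) * L t" by simp
          then show ?thesis using True by simp
        qed
        have r1: "\<bar>rbar \<tau> x y - emp_reward s a r t \<omega> x y\<bar> \<le> Vr + sqrt (8 * L t / max 1 (real N))"
        proof -
          have "\<bar>rbar \<tau> x y - emp_reward s a r t \<omega> x y\<bar> = \<bar>rbar \<tau> x y\<bar>" unfolding er V0 by simp
          also have "\<dots> \<le> 1" using assms(5) by (auto simp: abs_le_iff)
          finally show ?thesis using Vr0 sq1 by linarith
        qed
        have r2: "(\<Sum>x'\<in>UNIV. \<bar>pmf (p \<tau> x y) x' - emp_trans s a t \<omega> x y x'\<bar>) \<le> Vp + sqrt (8 * real CARD('s) * L t / max 1 (real N))"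
        proof -
          have "(\<Sum>x'\<in>UNIV. \<bar>pmf (p \<tau> x y) x' - emp_trans s a t \<omega> x y x'\<bar>) = (\<Sum>x'\<in>UNIV. pmf (p \<tau> x y) x')"
            unfolding et V0 by simp
          also have "\<dots> = 1" by (rule sum_pmf_eq_1) auto
          finally show ?thesis using Vp0 sq2 by linarith
        qed
        show ?thesis using r1 r2 \<omega>s unfolding R_def Q_def L_def by (simp add: vc)
      next
        case False
        then have N1: "1 \<le> N" by simp
        have Nt: "N < t"
        proof -
          have "N \<le> card {1..<t}" unfolding N_def V_def by (rule card_mono) auto
          then show ?thesis using t by auto
        qed
        have mx: "max 1 (real N) = real N" using N1 by simp
        have "E t x y N \<subseteq> Bad" unfolding Bad_def
          by (intro subsetI, rule UN_I[OF t], rule UN_I[OF UNIV_I], rule UN_I[OF UNIV_I], rule UN_I[of N]) (use N1 Nt in auto)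
        then have nE: "\<omega> \<notin> E t x y N" using nB by blast
        have nE1: "\<omega> \<notin> E1 t x y N" using nE unfolding E_def by blast
        have nE2: "\<omega> \<notin> E2 t x y N" using nE unfolding E_def by blast
        have nE3: "\<omega> \<notin> E3 t x y N B" for B using nE unfolding E_def by blast
        have sumI: "(\<Sum>k\<in>{1..<t}. Ind x y k \<omega>) = real N"
          unfolding Ind_def N_def V_def by (rule sum_ind_card) simp
        have SR: "(\<Sum>k\<in>{1..<t}. Ind x y k \<omega> * dr k \<omega>) = (\<Sum>k\<in>V. r k \<omega> - rbar k x y)"
        proof -
          have "(\<Sum>k\<in>{1..<t}. Ind x y k \<omega> * dr k \<omega>) = (\<Sum>k\<in>V. dr k \<omega>)"
            unfolding Ind_def V_def by (rule sum_ind_filter) simp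
          also have "\<dots> = (\<Sum>k\<in>V. r k \<omega> - rbar k x y)" by (rule sum.cong) (auto simp: V_def dr_def)
          finally show ?thesis .
        qed
        have SR': "(\<Sum>k\<in>{1..<t}. Ind x y k \<omega> * dr' k \<omega>) = (\<Sum>k\<in>V. rbar k x y - r k \<omega>)"
        proof -
          have "(\<Sum>k\<in>{1..<t}. Ind x y k \<omega> * dr' k \<omega>) = (\<Sum>k\<in>V. dr' k \<omega>)"
            unfolding Ind_def V_def by (rule sum_ind_filter) simp
          also have "\<dots> = (\<Sum>k\<in>V. rbar k x y - r k \<omega>)" by (rule sum.cong) (auto simp: V_def dr'_def)
          finally show ?thesis .
        qed
        have SP: "(\<Sum>k\<in>{1..<t}. Ind x y k \<omega> * dp B k \<omega>)
            = (\<Sum>k\<in>V. \<Sum>x'\<in>UNIV. (if x' \<in> B then 1 else -1) * (ind k \<omega> x' - pmf (p k x y) x'))" for B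
        proof -
          have "(\<Sum>k\<in>{1..<t}. Ind x y k \<omega> * dp B k \<omega>) = (\<Sum>k\<in>V. dp B k \<omega>)"
            unfolding Ind_def V_def by (rule sum_ind_filter) simp
          also have "\<dots> = (\<Sum>k\<in>V. \<Sum>x'\<in>UNIV. (if x' \<in> B then 1 else -1) * (ind k \<omega> x' - pmf (p k x y) x'))"
            by (rule sum.cong) (auto simp: V_def dp_def sg_def)
          finally show ?thesis .
        qed
        have c1: "(\<Sum>k\<in>V. r k \<omega> - rbar k x y) < real N * sqrt (8 * L t / real N)"
          using nE1 \<omega>s sumI SR unfolding E1_def u1_def by (simp add: not_le)
        have c2: "(\<Sum>k\<in>V. rbar k x y - r k \<omega>) < real N * sqrt (8 * L t / real N)"
          using nE2 \<omega>s sumI SR' unfolding E2_def u1_def by (simp add: not_le)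
        have c3: "\<forall>B. (\<Sum>k\<in>V. \<Sum>x'\<in>UNIV. (if x' \<in> B then 1 else -1) * (ind k \<omega> x' - pmf (p k x y) x'))
              < real N * sqrt (8 * real CARD('s) * L t / real N)"
          using nE3 \<omega>s sumI SP unfolding E3_def u3_def by (simp add: not_le)
        have r1: "\<bar>rbar \<tau> x y - (\<Sum>k\<in>V. r k \<omega>) / max 1 (real N)\<bar> \<le> Vr + sqrt (8 * L t / real N)"
          by (rule det_reward[OF Vf N_def[symmetric] N1 _ c1 c2]) (use varR Vin \<tau> in auto)
        have r2: "(\<Sum>x'\<in>UNIV. \<bar>pmf (p \<tau> x y) x' - (\<Sum>k\<in>V. ind k \<omega> x') / max 1 (real N)\<bar>)
            \<le> Vp + sqrt (8 * real CARD('s) * L t / real N)"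
          by (rule det_trans[where ind="\<lambda>k x'. ind k \<omega> x'" and Pk="\<lambda>k x'. pmf (p k x y) x'", OF Vf N_def[symmetric] N1 _ c3])
             (use varP Vin \<tau> in auto)
        show ?thesis using r1 r2 \<omega>s unfolding R_def Q_def L_def by (simp add: vc er et mx)
      qed
    qed
    then show "\<omega> \<in> G0" unfolding Geq using \<omega>s by blast
  qed
  have "1 - 5 * \<delta> / 6 \<le> 1 - \<delta> / 2" using assms(3) by simp
  also have "\<dots> \<le> 1 - measure M Bad" using Badb by simp
  also have "\<dots> = measure M (space M - Bad)" using prob_compl[OF Badm] by simp
  also have "\<dots> \<le> measure M G0" by (rule finite_measure_mono[OF Gsub Gm])
  finally show ?thesis unfolding G0_def .
qed

end
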